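(* Let $p>1$ and $q>1$. Let $f\in C_0^2(\mathbb{R})$ and $g\in C_0^1(\mathbb{R})$ satisfy $\operatorname{supp} f,\ \operatorname{supp} g\subset\{x\in\mathbb{R}:|x|\le R\}$ for some $R\ge 1$. Consider the initial value problem \[ \begin{cases} u_{tt}-u_{xx}=|u_t|^p|u_x|^q & \text{in } \mathbb{R}\times(0,T),\\ u(x,0)=\varepsilon f(x),\quad u_t(x,0)=\varepsilon g(x), & x\in\mathbb{R}, \end{cases} \] with a parameter $\varepsilon>0$. Then there exist constants $\varepsilon_0=\varepsilon_0(f,g,p,q,R)>0$ and $c>0$ (independent of $\varepsilon$) such that for every $0<\varepsilon\le\varepsilon_0$, a classical solution $u\in C^2(\mathbb{R}\times[0,T])$ of this problem exists whenever $T\le c\,\varepsilon^{-(p+q-1)}$. In particular the lifespan satisfies $T(\varepsilon)\ge c\,\varepsilon^{-(p+q-1)}$ for $0<\varepsilon\le\varepsilon_0$.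
   Context: The lifespan $T(\varepsilon)$ is the supremum of all $T>0$ such that a classical solution of the problem exists on $\mathbb{R}\times[0,T]$ for the fixed data $(f,g)$. *)

theory Defs
  imports "HOL-Analysis.Analysis"
begin

definition C2_supp :: "real \<Rightarrow> (real \<Rightarrow> real) \<Rightarrow> bool" where
  "C2_supp R f \<longleftrightarrow>
     (\<exists>f' f''. (\<forall>x. (f has_real_derivative f' x) (at x)) \<and>
               (\<forall>x. (f' has_real_derivative f'' x) (at x)) \<and>
               continuous_on UNIV f'') \<and>
     (\<forall>x. \<bar>x\<bar> > R \<longrightarrow> f x = 0)"

definition C1_supp :: "real \<Rightarrow> (real \<Rightarrow> real) \<Rightarrow> bool" where
  "C1_supp R g \<longleftrightarrow>
     (\<exists>g'. (\<forall>x. (g has_real_derivative g' x) (at x)) \<and> continuous_on UNIV g') \<and>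
     (\<forall>x. \<bar>x\<bar> > R \<longrightarrow> g x = 0)"

text \<open>Points are pairs (x,t); derivatives at the
  boundary t = 0, t = T are taken within the closed strip. ux, ut are the first
  partials, uxx, uxt, utx, utt the second partials (all continuous on the strip).\<close>
definition classical_solution ::
  "real \<Rightarrow> real \<Rightarrow> real \<Rightarrow> (real \<Rightarrow> real) \<Rightarrow> (real \<Rightarrow> real) \<Rightarrow> real
   \<Rightarrow> (real \<times> real \<Rightarrow> real) \<Rightarrow> bool" where
  "classical_solution p q \<epsilon> f g T u \<longleftrightarrow>
     (let S = (UNIV :: real set) \<times> {0..T} in
      \<exists>ux ut uxx uxt utx utt.
        (\<forall>z\<in>S. (u has_derivative (\<lambda>(h,k). ux z * h + ut z * k)) (at z within S)) \<and>
        (\<forall>z\<in>S. (ux has_derivative (\<lambda>(h,k). uxx z * h + uxt z * k)) (at z within S)) \<and>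
        (\<forall>z\<in>S. (ut has_derivative (\<lambda>(h,k). utx z * h + utt z * k)) (at z within S)) \<and>
        continuous_on S uxx \<and> continuous_on S uxt \<and>
        continuous_on S utx \<and> continuous_on S utt \<and>
        (\<forall>x t. 0 < t \<and> t < T \<longrightarrow>
           utt (x,t) - uxx (x,t) = \<bar>ut (x,t)\<bar> powr p * \<bar>ux (x,t)\<bar> powr q) \<and>
        (\<forall>x. u (x,0) = \<epsilon> * f x \<and> ut (x,0) = \<epsilon> * g x))"

text \<open>Lifespan: supremum of all T > 0 for which a classical solution exists
  (in the extended reals, so that it may be infinite).\<close>
definition lifespan ::
  "real \<Rightarrow> real \<Rightarrow> real \<Rightarrow> (real \<Rightarrow> real) \<Rightarrow> (real \<Rightarrow> real) \<Rightarrow> ereal" where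
  "lifespan p q \<epsilon> f g =
     Sup (ereal ` {T. T > 0 \<and> (\<exists>u. classical_solution p q \<epsilon> f g T u)})"

end

theory Submission
  imports Defs
begin


definition phi :: "real \<Rightarrow> real \<Rightarrow> real" where "phi p s = \<bar>s\<bar> powr p"
definition dphi :: "real \<Rightarrow> real \<Rightarrow> real" where "dphi p s = p * sgn s * \<bar>s\<bar> powr (p - 1)"

lemma abs_powr_tendsto0:
  assumes "e > 0" shows "((\<lambda>y::real. \<bar>y\<bar> powr e) \<longlongrightarrow> 0) (at 0)"
  by (rule tendsto_zero_powrI) (auto intro!: tendsto_eq_intros assms)

lemma phi_deriv:
  assumes p: "p > 1" shows "(phi p has_real_derivative dphi p s) (at s)"
proof -
  consider "s > 0" | "s < 0" | "s = 0" by linarith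
  then show ?thesis
  proof cases
    case 1
    have d: "((\<lambda>x. x powr p) has_real_derivative p * s powr (p - 1)) (at s)"
      using has_real_derivative_powr[OF 1] .
    show ?thesis
    proof (rule has_field_derivative_transform_within_open[OF _ _ _ ])
      show "((\<lambda>x. x powr p) has_real_derivative dphi p s) (at s)"
        using d 1 by (simp add: dphi_def)
      show "open {0::real<..}" by simp
      show "s \<in> {0<..}" using 1 by simp
      show "\<And>x. x \<in> {0<..} \<Longrightarrow> x powr p = phi p x" by (simp add: phi_def)
    qed
  next
    case 2
    have d0: "((\<lambda>x. x powr p) has_real_derivative p * (-s) powr (p - 1)) (at (-s))"
      using has_real_derivative_powr 2 by simp
    have d: "((\<lambda>x. (-x) powr p) has_real_derivative p * (-s) powr (p - 1) * (-1)) (at s)"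
      using DERIV_chain2[where f="\<lambda>x. x powr p" and g="uminus", OF d0 DERIV_minus[OF DERIV_ident]] by simp
    show ?thesis
    proof (rule has_field_derivative_transform_within_open[OF _ _ _ ])
      show "((\<lambda>x. (-x) powr p) has_real_derivative dphi p s) (at s)"
        using d 2 by (simp add: dphi_def)
      show "open {..<0::real}" by simp
      show "s \<in> {..<0}" using 2 by simp
      show "\<And>x. x \<in> {..<0} \<Longrightarrow> (-x) powr p = phi p x" by (simp add: phi_def)
    qed
  next
    case 3
    have "((\<lambda>y. (phi p y - phi p 0) / (y - 0)) \<longlongrightarrow> 0) (at 0)"
    proof (rule Lim_null_comparison[OF _ abs_powr_tendsto0[of "p - 1"]])
      show "\<forall>\<^sub>F x in at 0. norm ((phi p x - phi p 0) / (x - 0)) \<le> \<bar>x\<bar> powr (p - 1)"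
      proof (rule always_eventually, rule allI)
        fix x :: real
        show "norm ((phi p x - phi p 0) / (x - 0)) \<le> \<bar>x\<bar> powr (p - 1)"
        proof (cases "x = 0")
          case False
          then have "\<bar>x\<bar> powr p = \<bar>x\<bar> powr (p - 1) * \<bar>x\<bar>"
            by (simp add: powr_diff)
          then show ?thesis using False p by (simp add: phi_def abs_divide)
        qed simp
      qed
    qed (use p in simp)
    then show ?thesis using 3 by (simp add: has_field_derivative_iff dphi_def)
  qed
qed

lemma sgn_real_div: "sgn (x::real) = x / \<bar>x\<bar>"
  by (simp add: sgn_if)

lemma dphi_cont: assumes p: "p > 1" shows "isCont (dphi p) s"
proof (cases "s = 0")
  case False
  have e: "dphi p = (\<lambda>x. p * (x / \<bar>x\<bar>) * \<bar>x\<bar> powr (p - 1))"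
    by (rule ext) (simp add: dphi_def sgn_if)
  show ?thesis unfolding e using False by (intro continuous_intros) auto
next
  case True
  have "(dphi p \<longlongrightarrow> 0) (at 0)"
  proof (rule Lim_null_comparison)
    show "\<forall>\<^sub>F x in at 0. norm (dphi p x) \<le> p * \<bar>x\<bar> powr (p - 1)"
      using p by (intro always_eventually) (auto simp: dphi_def abs_mult sgn_if)
    show "((\<lambda>x. p * \<bar>x\<bar> powr (p - 1)) \<longlongrightarrow> 0) (at 0)"
      using tendsto_mult_right_zero[OF abs_powr_tendsto0[of "p - 1"], of p] p by simp
  qed
  then show ?thesis using True by (simp add: isCont_def dphi_def)
qed

lemma dphi_continuous_on: "p > 1 \<Longrightarrow> continuous_on S (dphi p)"
  by (simp add: continuous_at_imp_continuous_on dphi_cont)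

lemma phi_continuous_on: "p > 1 \<Longrightarrow> continuous_on S (phi p)"
  unfolding phi_def by (intro continuous_on_powr') (auto intro!: continuous_intros)

lemma phi_bound: "p > 0 \<Longrightarrow> \<bar>s\<bar> \<le> r \<Longrightarrow> \<bar>phi p s\<bar> \<le> r powr p"
  by (simp add: phi_def powr_mono2)

lemma dphi_bound: "p > 1 \<Longrightarrow> \<bar>s\<bar> \<le> r \<Longrightarrow> \<bar>dphi p s\<bar> \<le> p * r powr (p - 1)"
  by (auto simp: dphi_def abs_mult sgn_if intro!: powr_mono2 mult_left_mono)

lemma phi_lipschitz:
  assumes p: "p > 1" and x: "\<bar>x\<bar> \<le> r" and y: "\<bar>y\<bar> \<le> r"
  shows "\<bar>phi p x - phi p y\<bar> \<le> p * r powr (p - 1) * \<bar>x - y\<bar>"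
proof -
  have gen: "\<bar>phi p b - phi p a\<bar> \<le> p * r powr (p - 1) * \<bar>b - a\<bar>"
    if ab: "a < b" "\<bar>a\<bar> \<le> r" "\<bar>b\<bar> \<le> r" for a b
  proof -
    obtain z where z: "a < z" "z < b" "phi p b - phi p a = (b - a) * dphi p z"
      using MVT2[OF ab(1), of "phi p" "dphi p"] phi_deriv[OF p] by blast
    have "\<bar>z\<bar> \<le> r" using z ab by auto
    then have "\<bar>dphi p z\<bar> \<le> p * r powr (p - 1)" using dphi_bound p by blast
    then show ?thesis using z(3) ab(1) by (simp add: abs_mult mult.commute mult_left_mono)
  qed
  consider "x < y" | "y < x" | "x = y" by linarith
  then show ?thesis
    by cases (use gen[of x y] gen[of y x] x y in \<open>auto simp: abs_minus_commute\<close>)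
qed


lemma phi_even: "phi p (-x) = phi p x" by (simp add: phi_def)
lemma dphi_odd: "dphi p (-x) = - dphi p x" by (simp add: dphi_def)

lemma phi_chain[derivative_intros]:
  "p > 1 \<Longrightarrow> (f has_real_derivative D) (at x within S) \<Longrightarrow>
   ((\<lambda>x. phi p (f x)) has_real_derivative dphi p (f x) * D) (at x within S)"
  by (rule DERIV_chain2[OF phi_deriv])

lemma phi_cont[continuous_intros]:
  "p > 1 \<Longrightarrow> continuous_on S f \<Longrightarrow> continuous_on S (\<lambda>x. phi p (f x))"
  using continuous_on_compose2[OF phi_continuous_on[of p UNIV], of S f] by auto

lemma dphi_cont'[continuous_intros]:
  "p > 1 \<Longrightarrow> continuous_on S f \<Longrightarrow> continuous_on S (\<lambda>x. dphi p (f x))"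
  using continuous_on_compose2[OF dphi_continuous_on[of p UNIV], of S f] by auto

definition GG :: "real \<Rightarrow> real \<Rightarrow> real \<Rightarrow> real \<Rightarrow> real" where
  "GG p q a b = phi p ((a+b)/2) * phi q ((a-b)/2)"
definition G1 :: "real \<Rightarrow> real \<Rightarrow> real \<Rightarrow> real \<Rightarrow> real" where
  "G1 p q a b = dphi p ((a+b)/2) / 2 * phi q ((a-b)/2) + phi p ((a+b)/2) * dphi q ((a-b)/2) / 2"
definition G2 :: "real \<Rightarrow> real \<Rightarrow> real \<Rightarrow> real \<Rightarrow> real" where
  "G2 p q a b = dphi p ((a+b)/2) / 2 * phi q ((a-b)/2) - phi p ((a+b)/2) * dphi q ((a-b)/2) / 2"

lemma GG_sym: "GG p q a b = GG p q b a"
proof -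
  have "(b - a) / 2 = - ((a - b)/2)" by (auto simp: field_simps)
  then show ?thesis unfolding GG_def by (simp only: phi_even add.commute)
qed

lemma G1_G2_sym: "G1 p q a b = G2 p q b a"
proof -
  have "(b - a) / 2 = - ((a - b)/2)" by (auto simp: field_simps)
  then show ?thesis unfolding G1_def G2_def by (simp only: phi_even dphi_odd add.commute)
qed

lemma GG_chain:
  assumes "p > 1" "q > 1"
    and "(X has_real_derivative DX) (at x within S)" "(Y has_real_derivative DY) (at x within S)"
  shows "((\<lambda>x. GG p q (X x) (Y x)) has_real_derivative
           (G1 p q (X x) (Y x) * DX + G2 p q (X x) (Y x) * DY)) (at x within S)"
proof -
  have d1: "((\<lambda>x. (X x + Y x)/2) has_real_derivative (DX+DY)/2) (at x within S)"
    using assms(3,4) by (auto intro!: derivative_eq_intros)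
  have d2: "((\<lambda>x. (X x - Y x)/2) has_real_derivative (DX-DY)/2) (at x within S)"
    using assms(3,4) by (auto intro!: derivative_eq_intros)
  show ?thesis unfolding GG_def
    using DERIV_mult[OF phi_chain[OF assms(1) d1] phi_chain[OF assms(2) d2]]
    by (rule DERIV_cong) (simp add: G1_def G2_def field_simps)
qed

lemma GG_cont[continuous_intros]:
  "p > 1 \<Longrightarrow> q > 1 \<Longrightarrow> continuous_on S f \<Longrightarrow> continuous_on S g \<Longrightarrow>
   continuous_on S (\<lambda>x. GG p q (f x) (g x))"
  unfolding GG_def by (intro continuous_intros) auto

lemma G1_cont[continuous_intros]:
  "p > 1 \<Longrightarrow> q > 1 \<Longrightarrow> continuous_on S f \<Longrightarrow> continuous_on S g \<Longrightarrow>
   continuous_on S (\<lambda>x. G1 p q (f x) (g x))"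
  unfolding G1_def by (intro continuous_intros) auto

lemma G2_cont[continuous_intros]:
  "p > 1 \<Longrightarrow> q > 1 \<Longrightarrow> continuous_on S f \<Longrightarrow> continuous_on S g \<Longrightarrow>
   continuous_on S (\<lambda>x. G2 p q (f x) (g x))"
  unfolding G2_def by (intro continuous_intros) auto

lemma powr_split: "(r::real) powr (p - 1) * r powr q = r powr (p + q - 1)"
  by (simp add: powr_add[symmetric] diff_add_eq)

lemma powr_split2: "(r::real) powr p * r powr (q - 1) = r powr (p + q - 1)"
  by (simp add: powr_add[symmetric] add_diff_eq)

lemma GG_bound:
  assumes "p > 1" "q > 1" "\<bar>a\<bar> \<le> r" "\<bar>b\<bar> \<le> r"
  shows "\<bar>GG p q a b\<bar> \<le> r powr (p + q)"
proof -
  have "\<bar>(a+b)/2\<bar> \<le> r" "\<bar>(a-b)/2\<bar> \<le> r" using assms by auto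
  then have "\<bar>phi p ((a+b)/2)\<bar> \<le> r powr p" "\<bar>phi q ((a-b)/2)\<bar> \<le> r powr q"
    using phi_bound assms by auto
  then have "\<bar>GG p q a b\<bar> \<le> r powr p * r powr q"
    unfolding GG_def abs_mult by (intro mult_mono) auto
  then show ?thesis by (simp add: powr_add)
qed

lemma G12_bound:
  assumes "p > 1" "q > 1" "\<bar>a\<bar> \<le> r" "\<bar>b\<bar> \<le> r"
  shows "\<bar>G1 p q a b\<bar> \<le> (p + q) * r powr (p + q - 1)" "\<bar>G2 p q a b\<bar> \<le> (p + q) * r powr (p + q - 1)"
proof -
  have r: "r \<ge> 0" using assms by auto
  have "\<bar>(a+b)/2\<bar> \<le> r" "\<bar>(a-b)/2\<bar> \<le> r" using assms by auto
  then have 1: "\<bar>phi p ((a+b)/2)\<bar> \<le> r powr p" "\<bar>phi q ((a-b)/2)\<bar> \<le> r powr q"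
    and 2: "\<bar>dphi p ((a+b)/2)\<bar> \<le> p * r powr (p - 1)" "\<bar>dphi q ((a-b)/2)\<bar> \<le> q * r powr (q - 1)"
    using phi_bound dphi_bound assms by auto
  have "\<bar>dphi p ((a+b)/2) / 2 * phi q ((a-b)/2)\<bar> \<le> p * r powr (p - 1) / 2 * r powr q"
    unfolding abs_mult abs_divide using 1 2 by (intro mult_mono divide_right_mono) auto
  also have "\<dots> = p / 2 * r powr (p + q - 1)" by (simp add: powr_split[symmetric])
  finally have A: "\<bar>dphi p ((a+b)/2) / 2 * phi q ((a-b)/2)\<bar> \<le> p / 2 * r powr (p + q - 1)" .
  have "\<bar>phi p ((a+b)/2) * dphi q ((a-b)/2) / 2\<bar> = \<bar>phi p ((a+b)/2)\<bar> * \<bar>dphi q ((a-b)/2)\<bar> / 2"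
    by (simp add: abs_mult)
  also have "\<dots> \<le> r powr p * (q * r powr (q - 1)) / 2"
    using 1 2 by (intro mult_mono divide_right_mono) auto
  also have "\<dots> = q / 2 * r powr (p + q - 1)"
    using powr_split[of r q p] by (simp add: algebra_simps)
  finally have B: "\<bar>phi p ((a+b)/2) * dphi q ((a-b)/2) / 2\<bar> \<le> q / 2 * r powr (p + q - 1)" .
  have C: "0 \<le> r powr (p + q - 1)" by simp
  have D: "p / 2 * r powr (p + q - 1) + q / 2 * r powr (p + q - 1) \<le> (p + q) * r powr (p + q - 1)"
  proof -
    have "(p + q) * r powr (p + q - 1) = p / 2 * r powr (p + q - 1) + q / 2 * r powr (p + q - 1) + (p+q)/2 * r powr (p + q - 1)"
      by (simp add: field_simps)
    moreover have "(p+q)/2 * r powr (p + q - 1) \<ge> 0" using assms(1,2) by simp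
    ultimately show ?thesis by linarith
  qed
  show "\<bar>G1 p q a b\<bar> \<le> (p + q) * r powr (p + q - 1)"
    unfolding G1_def using A B D abs_triangle_ineq[of "dphi p ((a+b)/2) / 2 * phi q ((a-b)/2)" "phi p ((a+b)/2) * dphi q ((a-b)/2) / 2"] by linarith
  show "\<bar>G2 p q a b\<bar> \<le> (p + q) * r powr (p + q - 1)"
    unfolding G2_def using A B D abs_triangle_ineq4[of "dphi p ((a+b)/2) / 2 * phi q ((a-b)/2)" "phi p ((a+b)/2) * dphi q ((a-b)/2) / 2"] by linarith
qed

lemma GG_lipschitz:
  assumes "p > 1" "q > 1" "\<bar>a\<bar> \<le> r" "\<bar>b\<bar> \<le> r" "\<bar>a'\<bar> \<le> r" "\<bar>b'\<bar> \<le> r"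
  shows "\<bar>GG p q a b - GG p q a' b'\<bar> \<le> (p + q) * r powr (p + q - 1) * (\<bar>a - a'\<bar> + \<bar>b - b'\<bar>)"
proof -
  define x y x' y' where "x = (a+b)/2" "y = (a-b)/2" "x' = (a'+b')/2" "y' = (a'-b')/2"
  have b: "\<bar>x\<bar> \<le> r" "\<bar>y\<bar> \<le> r" "\<bar>x'\<bar> \<le> r" "\<bar>y'\<bar> \<le> r" using assms by (auto simp: x_y_x'_y'_def)
  have e1: "x - x' = ((a - a') + (b - b'))/2" by (simp add: x_y_x'_y'_def field_simps)
  have e2: "y - y' = ((a - a') - (b - b'))/2" by (simp add: x_y_x'_y'_def field_simps)
  have d1: "\<bar>x - x'\<bar> \<le> (\<bar>a - a'\<bar> + \<bar>b - b'\<bar>)/2"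
    unfolding e1 using abs_triangle_ineq[of "a - a'" "b - b'"] by (simp add: divide_right_mono)
  have d2: "\<bar>y - y'\<bar> \<le> (\<bar>a - a'\<bar> + \<bar>b - b'\<bar>)/2"
    unfolding e2 using abs_triangle_ineq4[of "a - a'" "b - b'"] by (simp add: divide_right_mono)
  note d = d1 d2
  have "GG p q a b - GG p q a' b' = (phi p x - phi p x') * phi q y + phi p x' * (phi q y - phi q y')"
    by (simp add: GG_def x_y_x'_y'_def algebra_simps)
  also have "\<bar>\<dots>\<bar> \<le> \<bar>phi p x - phi p x'\<bar> * \<bar>phi q y\<bar> + \<bar>phi p x'\<bar> * \<bar>phi q y - phi q y'\<bar>"
    by (simp add: abs_mult[symmetric] abs_triangle_ineq)
  also have "\<dots> \<le> (p * r powr (p - 1) * \<bar>x - x'\<bar>) * r powr q + r powr p * (q * r powr (q - 1) * \<bar>y - y'\<bar>)"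
    using phi_lipschitz[OF assms(1) b(1,3)] phi_lipschitz[OF assms(2) b(2,4)]
      phi_bound[OF _ b(2), of q] phi_bound[OF _ b(3), of p] assms(1,2)
    by (intro add_mono mult_mono) auto
  also have "\<dots> = p * \<bar>x - x'\<bar> * (r powr (p - 1) * r powr q) + q * \<bar>y - y'\<bar> * (r powr p * r powr (q - 1))"
    by (simp add: algebra_simps)
  also have "\<dots> = (p * \<bar>x - x'\<bar> + q * \<bar>y - y'\<bar>) * r powr (p + q - 1)"
    by (simp only: powr_split powr_split2) (simp add: algebra_simps)
  also have "\<dots> \<le> (p * ((\<bar>a - a'\<bar> + \<bar>b - b'\<bar>)/2) + q * ((\<bar>a - a'\<bar> + \<bar>b - b'\<bar>)/2)) * r powr (p + q - 1)"
    using d assms(1,2) by (intro mult_right_mono add_mono mult_left_mono) auto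
  also have "\<dots> = ((p + q) * r powr (p + q - 1) * (\<bar>a - a'\<bar> + \<bar>b - b'\<bar>)) / 2"
    by (simp add: field_simps)
  also have "\<dots> \<le> (p + q) * r powr (p + q - 1) * (\<bar>a - a'\<bar> + \<bar>b - b'\<bar>)"
  proof -
    have "0 \<le> (p + q) * r powr (p + q - 1) * (\<bar>a - a'\<bar> + \<bar>b - b'\<bar>)"
      using assms(1,2) by simp
    then show ?thesis by linarith
  qed
  finally show ?thesis .
qed



lemma G12_unif:
  assumes p: "p > 1" and q: "q > 1" and e: "e > 0"
  shows "\<exists>d>0. \<forall>a b a' b'. \<bar>a\<bar> \<le> r \<longrightarrow> \<bar>b\<bar> \<le> r \<longrightarrow> \<bar>a'\<bar> \<le> r \<longrightarrow> \<bar>b'\<bar> \<le> r \<longrightarrow>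
           \<bar>a - a'\<bar> < d \<longrightarrow> \<bar>b - b'\<bar> < d \<longrightarrow>
           \<bar>G1 p q a b - G1 p q a' b'\<bar> < e \<and> \<bar>G2 p q a b - G2 p q a' b'\<bar> < e"
proof -
  define S where "S = {-r..r} \<times> {-r..r}"
  have cS: "compact S" unfolding S_def by (intro compact_Times compact_Icc)
  have c1: "continuous_on S (\<lambda>z. G1 p q (fst z) (snd z))"
    using p q by (intro continuous_intros) auto
  have c2: "continuous_on S (\<lambda>z. G2 p q (fst z) (snd z))"
    using p q by (intro continuous_intros) auto
  obtain d1 where d1: "d1 > 0" "\<And>x x'. x \<in> S \<Longrightarrow> x' \<in> S \<Longrightarrow> dist x' x < d1 \<Longrightarrow>
      dist (G1 p q (fst x') (snd x')) (G1 p q (fst x) (snd x)) < e"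
    using compact_uniformly_continuous[OF c1 cS] e unfolding uniformly_continuous_on_def by metis
  obtain d2 where d2: "d2 > 0" "\<And>x x'. x \<in> S \<Longrightarrow> x' \<in> S \<Longrightarrow> dist x' x < d2 \<Longrightarrow>
      dist (G2 p q (fst x') (snd x')) (G2 p q (fst x) (snd x)) < e"
    using compact_uniformly_continuous[OF c2 cS] e unfolding uniformly_continuous_on_def by metis
  show ?thesis
  proof (intro exI[of _ "min d1 d2 / 2"] conjI allI impI)
    show "min d1 d2 / 2 > 0" using d1 d2 by simp
    fix a b a' b' :: real
    assume h: "\<bar>a\<bar> \<le> r" "\<bar>b\<bar> \<le> r" "\<bar>a'\<bar> \<le> r" "\<bar>b'\<bar> \<le> r"
      "\<bar>a - a'\<bar> < min d1 d2 / 2" "\<bar>b - b'\<bar> < min d1 d2 / 2"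
    have mem: "(a, b) \<in> S" "(a', b') \<in> S" using h by (auto simp: S_def abs_le_iff)
    have "dist (a, b) (a', b') \<le> \<bar>a - a'\<bar> + \<bar>b - b'\<bar>"
      unfolding dist_Pair_Pair dist_real_def using sqrt_sum_squares_le_sum_abs[of "a-a'" "b-b'"] by simp
    then have dd: "dist (a, b) (a', b') < d1" "dist (a, b) (a', b') < d2" using h by auto
    show "\<bar>G1 p q a b - G1 p q a' b'\<bar> < e"
      using d1(2)[OF mem(2) mem(1) dd(1)] by (simp add: dist_real_def)
    show "\<bar>G2 p q a b - G2 p q a' b'\<bar> < e"
      using d2(2)[OF mem(2) mem(1) dd(2)] by (simp add: dist_real_def)
  qed
qed

lemma slice_cont:
  fixes T t x :: real
  assumes "continuous_on (UNIV \<times> {0..T}) F" "t \<le> T"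
  shows "continuous_on {0..t} (\<lambda>s. F (x, s))"
proof (rule continuous_on_compose2[OF assms(1)])
  show "continuous_on {0..t} (\<lambda>s. (x, s))" by (intro continuous_intros)
  show "(\<lambda>s. (x, s)) ` {0..t} \<subseteq> UNIV \<times> {0..T}" using assms(2) by auto
qed

lemma shift_cont:
  fixes T k :: real
  assumes "continuous_on (UNIV \<times> {0..T}) Y"
  shows "continuous_on (UNIV \<times> {0..T}) (\<lambda>z. Y (fst z + k * snd z, snd z))"
proof (rule continuous_on_compose2[OF assms(1)])
  show "continuous_on (UNIV \<times> {0..T}) (\<lambda>z::real\<times>real. (fst z + k * snd z, snd z))"
    by (intro continuous_on_Pair continuous_on_add continuous_on_fst continuous_on_snd continuous_on_mult_left continuous_on_id)
qed auto

lemma int_bound: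
  fixes T t B :: real
  assumes "0 \<le> t" "t \<le> T" "continuous_on {0..t} h" "\<And>s. s \<in> {0..t} \<Longrightarrow> \<bar>h s\<bar> \<le> B"
  shows "\<bar>integral {0..t} h\<bar> \<le> T * B"
proof -
  have "\<bar>h 0\<bar> \<le> B" using assms(4)[of 0] assms(1) by auto
  then have B: "B \<ge> 0" by (meson abs_ge_zero order_trans)
  have "\<bar>integral {0..t} h\<bar> \<le> B * (t - 0)"
    using integral_bound[OF assms(1) assms(3), of B] assms(4) by auto
  also have "\<dots> \<le> T * B" using B assms by (simp add: mult.commute mult_left_mono)
  finally show ?thesis .
qed

lemma stretch_image: "t > 0 \<Longrightarrow> (\<lambda>x. x / t) ` {0..t} = {0..(1::real)}"
proof safe
  fix y :: real assume "t > 0" "y \<in> {0..1}"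
  then show "y \<in> (\<lambda>x. x / t) ` {0..t}"
    by (intro image_eqI[of _ _ "t * y"]) (auto simp: mult_le_cancel_left1)
qed (auto simp: divide_le_eq_1)

lemma int_cont:
  fixes T :: real and h :: "real \<times> real \<Rightarrow> real"
  assumes h: "continuous_on (UNIV \<times> {0..T}) h"
  shows "continuous_on (UNIV \<times> {0..T}) (\<lambda>z. integral {0..snd z} (\<lambda>s. h (fst z, s)))"
proof -
  let ?Z = "(UNIV \<times> {0..T}) :: (real \<times> real) set"
  have eq: "integral {0..snd z} (\<lambda>s. h (fst z, s)) = snd z * integral (cbox 0 1) (\<lambda>th. h (fst z, snd z * th))"
    if z: "z \<in> ?Z" for z
  proof (cases "snd z = 0")
    case True then show ?thesis by simp
  next
    case False
    then have t: "snd z > 0" using z by auto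
    have "integral {0..1} (\<lambda>th. h (fst z, snd z * th)) = (1 / \<bar>snd z\<bar>) *\<^sub>R integral {0..snd z} (\<lambda>s. h (fst z, s))"
      using integral_stretch_real[of "snd z" 0 "snd z" "\<lambda>s. h (fst z, s)"] t stretch_image[OF t] by simp
    then show ?thesis using t by (simp add: box_real)
  qed
  have "continuous_on ?Z (\<lambda>z. snd z * integral (cbox 0 1) (\<lambda>th. h (fst z, snd z * th)))"
  proof (intro continuous_intros integral_continuous_on_param)
    show "continuous_on (?Z \<times> cbox 0 1) (\<lambda>(z, th). h (fst z, snd z * th))"
    proof -
      have "continuous_on ((UNIV \<times> {0..T}) \<times> {0..1}) (\<lambda>w::(real\<times>real)\<times>real. h (fst (fst w), snd (fst w) * snd w))"
      proof (rule continuous_on_compose2[OF h])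
        show "continuous_on ((UNIV \<times> {0..T}) \<times> {0..1}) (\<lambda>w::(real\<times>real)\<times>real. (fst (fst w), snd (fst w) * snd w))"
          by (intro continuous_intros)
        show "(\<lambda>w::(real\<times>real)\<times>real. (fst (fst w), snd (fst w) * snd w)) ` ((UNIV \<times> {0..T}) \<times> {0..1}) \<subseteq> UNIV \<times> {0..T}"
        proof clarsimp
          fix t th :: real assume "0 \<le> t" "t \<le> T" "0 \<le> th" "th \<le> 1"
          then show "t * th \<le> T" using mult_right_le_one_le[of t th] by linarith
        qed
      qed
      then show ?thesis unfolding box_real by (simp add: case_prod_beta')
    qed
  qed
  then show ?thesis by (rule continuous_on_cong[THEN iffD1, rotated 2]) (use eq in auto)
qed



definition opA :: "real \<Rightarrow> real \<Rightarrow> real \<Rightarrow> (real \<Rightarrow> real) \<Rightarrow> (real\<times>real \<Rightarrow> real) \<Rightarrow> (real\<times>real \<Rightarrow> real) \<Rightarrow> real\<times>real \<Rightarrow> real" where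
  "opA p q k c X Y = (\<lambda>z. c (fst z) + integral {0..snd z} (\<lambda>s. GG p q (X (fst z, s)) (Y (fst z + k * s, s))))"

definition opD :: "real \<Rightarrow> real \<Rightarrow> real \<Rightarrow> (real \<Rightarrow> real) \<Rightarrow> (real\<times>real \<Rightarrow> real) \<Rightarrow> (real\<times>real \<Rightarrow> real)
     \<Rightarrow> (real\<times>real \<Rightarrow> real) \<Rightarrow> (real\<times>real \<Rightarrow> real) \<Rightarrow> real\<times>real \<Rightarrow> real" where
  "opD p q k c X Y DX DY = (\<lambda>z. c (fst z) + integral {0..snd z} (\<lambda>s.
      G1 p q (X (fst z, s)) (Y (fst z + k * s, s)) * DX (fst z, s) +
      G2 p q (X (fst z, s)) (Y (fst z + k * s, s)) * DY (fst z + k * s, s)))"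

context
  fixes p q T k :: real
  assumes p: "p > 1" and q: "q > 1"
begin

lemma integrandA_cont:
  assumes "continuous_on (UNIV \<times> {0..T}) X" "continuous_on (UNIV \<times> {0..T}) Y"
  shows "continuous_on (UNIV \<times> {0..T}) (\<lambda>z. GG p q (X z) (Y (fst z + k * snd z, snd z)))"
  using p q assms shift_cont[OF assms(2)] by (intro GG_cont) auto

lemma integrandD_cont:
  assumes "continuous_on (UNIV \<times> {0..T}) X" "continuous_on (UNIV \<times> {0..T}) Y"
    "continuous_on (UNIV \<times> {0..T}) DX" "continuous_on (UNIV \<times> {0..T}) DY"
  shows "continuous_on (UNIV \<times> {0..T}) (\<lambda>z. G1 p q (X z) (Y (fst z + k * snd z, snd z)) * DX z +
            G2 p q (X z) (Y (fst z + k * snd z, snd z)) * DY (fst z + k * snd z, snd z))"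
  using p q assms shift_cont[OF assms(2)] shift_cont[OF assms(4)]
  by (intro continuous_intros) auto

lemma c_cont: "continuous_on UNIV c \<Longrightarrow> continuous_on (UNIV \<times> {0..T}) (\<lambda>z::real\<times>real. c (fst z))"
  by (rule continuous_on_compose2[of UNIV c]) (auto intro!: continuous_intros)

lemma opA_cont:
  assumes "continuous_on UNIV c" "continuous_on (UNIV \<times> {0..T}) X" "continuous_on (UNIV \<times> {0..T}) Y"
  shows "continuous_on (UNIV \<times> {0..T}) (opA p q k c X Y)"
  unfolding opA_def
  using continuous_on_add[OF c_cont[OF assms(1)] int_cont[OF integrandA_cont[OF assms(2,3)]]]
  by simp

lemma opD_cont:
  assumes "continuous_on UNIV c" "continuous_on (UNIV \<times> {0..T}) X" "continuous_on (UNIV \<times> {0..T}) Y"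
    "continuous_on (UNIV \<times> {0..T}) DX" "continuous_on (UNIV \<times> {0..T}) DY"
  shows "continuous_on (UNIV \<times> {0..T}) (opD p q k c X Y DX DY)"
  unfolding opD_def
  using continuous_on_add[OF c_cont[OF assms(1)] int_cont[OF integrandD_cont[OF assms(2-5)]]]
  by simp

lemma opA_bound:
  assumes "continuous_on (UNIV \<times> {0..T}) X" "continuous_on (UNIV \<times> {0..T}) Y"
    and bX: "\<And>z. z \<in> UNIV \<times> {0..T} \<Longrightarrow> \<bar>X z\<bar> \<le> r"
    and bY: "\<And>z. z \<in> UNIV \<times> {0..T} \<Longrightarrow> \<bar>Y z\<bar> \<le> r"
    and bc: "\<And>x. \<bar>c x\<bar> \<le> M"
    and z: "z \<in> UNIV \<times> {0..T}"
  shows "\<bar>opA p q k c X Y z\<bar> \<le> M + T * r powr (p + q)"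
proof -
  obtain x t where zt: "z = (x, t)" "0 \<le> t" "t \<le> T" using z by auto
  have "\<bar>integral {0..t} (\<lambda>s. GG p q (X (x, s)) (Y (x + k * s, s)))\<bar> \<le> T * r powr (p + q)"
  proof (rule int_bound[OF zt(2,3)])
    show "continuous_on {0..t} (\<lambda>s. GG p q (X (x, s)) (Y (x + k * s, s)))"
      using slice_cont[OF integrandA_cont[OF assms(1,2)] zt(3), of x] by simp
    fix s assume "s \<in> {0..t}"
    then show "\<bar>GG p q (X (x, s)) (Y (x + k * s, s))\<bar> \<le> r powr (p + q)"
      using zt by (intro GG_bound p q bX bY) auto
  qed
  then show ?thesis using bc[of x] zt by (simp add: opA_def)
qed

lemma opA_lip:
  assumes cX: "continuous_on (UNIV \<times> {0..T}) X" and cY: "continuous_on (UNIV \<times> {0..T}) Y"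
    and cX': "continuous_on (UNIV \<times> {0..T}) X'" and cY': "continuous_on (UNIV \<times> {0..T}) Y'"
    and bX: "\<And>z. z \<in> UNIV \<times> {0..T} \<Longrightarrow> \<bar>X z\<bar> \<le> r"
    and bY: "\<And>z. z \<in> UNIV \<times> {0..T} \<Longrightarrow> \<bar>Y z\<bar> \<le> r"
    and bX': "\<And>z. z \<in> UNIV \<times> {0..T} \<Longrightarrow> \<bar>X' z\<bar> \<le> r"
    and bY': "\<And>z. z \<in> UNIV \<times> {0..T} \<Longrightarrow> \<bar>Y' z\<bar> \<le> r"
    and dX: "\<And>z. z \<in> UNIV \<times> {0..T} \<Longrightarrow> \<bar>X z - X' z\<bar> \<le> d"
    and dY: "\<And>z. z \<in> UNIV \<times> {0..T} \<Longrightarrow> \<bar>Y z - Y' z\<bar> \<le> d"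
    and z: "z \<in> UNIV \<times> {0..T}"
  shows "\<bar>opA p q k c X Y z - opA p q k c X' Y' z\<bar> \<le> T * ((p + q) * r powr (p + q - 1) * (2 * d))"
proof -
  obtain x t where zt: "z = (x, t)" "0 \<le> t" "t \<le> T" using z by auto
  let ?f = "\<lambda>s. GG p q (X (x, s)) (Y (x + k * s, s))"
  let ?g = "\<lambda>s. GG p q (X' (x, s)) (Y' (x + k * s, s))"
  have cf: "continuous_on {0..t} ?f"
    using slice_cont[OF integrandA_cont[OF cX cY] zt(3), of x] by simp
  have cg: "continuous_on {0..t} ?g"
    using slice_cont[OF integrandA_cont[OF cX' cY'] zt(3), of x] by simp
  have "opA p q k c X Y z - opA p q k c X' Y' z = integral {0..t} (\<lambda>s. ?f s - ?g s)"
    using zt integral_diff[OF integrable_continuous_real[OF cf] integrable_continuous_real[OF cg]]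
    by (simp add: opA_def)
  also have "\<bar>\<dots>\<bar> \<le> T * ((p + q) * r powr (p + q - 1) * (2 * d))"
  proof (rule int_bound[OF zt(2,3)])
    show "continuous_on {0..t} (\<lambda>s. ?f s - ?g s)" by (rule continuous_on_diff[OF cf cg])
    fix s assume s: "s \<in> {0..t}"
    then have m: "(x, s) \<in> UNIV \<times> {0..T}" "(x + k * s, s) \<in> UNIV \<times> {0..T}" using zt by auto
    have "\<bar>?f s - ?g s\<bar> \<le> (p + q) * r powr (p + q - 1) * (\<bar>X (x,s) - X' (x,s)\<bar> + \<bar>Y (x + k * s, s) - Y' (x + k * s, s)\<bar>)"
      using m by (intro GG_lipschitz p q bX bY bX' bY')
    also have "\<dots> \<le> (p + q) * r powr (p + q - 1) * (2 * d)"
      using dX[OF m(1)] dY[OF m(2)] p q by (intro mult_left_mono) auto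
    finally show "\<bar>?f s - ?g s\<bar> \<le> (p + q) * r powr (p + q - 1) * (2 * d)" .
  qed
  finally show ?thesis .
qed


lemma lin4:
  fixes g1 g2 g1' g2' a b a' b' L d B w :: real
  assumes "\<bar>g1\<bar> \<le> L" "\<bar>g2\<bar> \<le> L" "\<bar>a - a'\<bar> \<le> d" "\<bar>b - b'\<bar> \<le> d" "\<bar>a'\<bar> \<le> B" "\<bar>b'\<bar> \<le> B"
    "\<bar>g1 - g1'\<bar> \<le> w" "\<bar>g2 - g2'\<bar> \<le> w"
  shows "\<bar>g1 * a + g2 * b - (g1' * a' + g2' * b')\<bar> \<le> 2 * L * d + 2 * B * w"
proof -
  have e: "g1 * a + g2 * b - (g1' * a' + g2' * b') = g1 * (a - a') + (g1 - g1') * a' + g2 * (b - b') + (g2 - g2') * b'"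
    by (simp add: algebra_simps)
  have 1: "\<bar>g1 * (a - a')\<bar> \<le> L * d" unfolding abs_mult using assms by (intro mult_mono) auto
  have 2: "\<bar>(g1 - g1') * a'\<bar> \<le> w * B" unfolding abs_mult using assms by (intro mult_mono) auto
  have 3: "\<bar>g2 * (b - b')\<bar> \<le> L * d" unfolding abs_mult using assms by (intro mult_mono) auto
  have 4: "\<bar>(g2 - g2') * b'\<bar> \<le> w * B" unfolding abs_mult using assms by (intro mult_mono) auto
  have sum4: "\<bar>A + B' + C + D\<bar> \<le> 2 * x + 2 * y" if "\<bar>A\<bar> \<le> x" "\<bar>B'\<bar> \<le> y" "\<bar>C\<bar> \<le> x" "\<bar>D\<bar> \<le> y"
    for A B' C D x y :: real using that by arith
  have eq: "2 * (L * d) + 2 * (w * B) = 2 * L * d + 2 * B * w" by (simp add: algebra_simps)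
  show ?thesis unfolding e using sum4[OF 1 2 3 4] unfolding eq .
qed

lemma lin2:
  fixes g1 g2 a b L B :: real
  assumes "\<bar>g1\<bar> \<le> L" "\<bar>g2\<bar> \<le> L" "\<bar>a\<bar> \<le> B" "\<bar>b\<bar> \<le> B"
  shows "\<bar>g1 * a + g2 * b\<bar> \<le> 2 * L * B"
proof -
  have 1: "\<bar>g1 * a\<bar> \<le> L * B" unfolding abs_mult using assms by (intro mult_mono) auto
  have 2: "\<bar>g2 * b\<bar> \<le> L * B" unfolding abs_mult using assms by (intro mult_mono) auto
  show ?thesis using 1 2 abs_triangle_ineq[of "g1 * a" "g2 * b"] by simp
qed

lemma opD_bound:
  assumes cX: "continuous_on (UNIV \<times> {0..T}) X" and cY: "continuous_on (UNIV \<times> {0..T}) Y"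
    and cDX: "continuous_on (UNIV \<times> {0..T}) DX" and cDY: "continuous_on (UNIV \<times> {0..T}) DY"
    and bX: "\<And>z. z \<in> UNIV \<times> {0..T} \<Longrightarrow> \<bar>X z\<bar> \<le> r"
    and bY: "\<And>z. z \<in> UNIV \<times> {0..T} \<Longrightarrow> \<bar>Y z\<bar> \<le> r"
    and bDX: "\<And>z. z \<in> UNIV \<times> {0..T} \<Longrightarrow> \<bar>DX z\<bar> \<le> B"
    and bDY: "\<And>z. z \<in> UNIV \<times> {0..T} \<Longrightarrow> \<bar>DY z\<bar> \<le> B"
    and bc: "\<And>x. \<bar>c x\<bar> \<le> M"
    and z: "z \<in> UNIV \<times> {0..T}"
  shows "\<bar>opD p q k c X Y DX DY z\<bar> \<le> M + T * (2 * ((p + q) * r powr (p + q - 1)) * B)"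
proof -
  obtain x t where zt: "z = (x, t)" "0 \<le> t" "t \<le> T" using z by auto
  have "\<bar>integral {0..t} (\<lambda>s. G1 p q (X (x, s)) (Y (x + k * s, s)) * DX (x, s) +
      G2 p q (X (x, s)) (Y (x + k * s, s)) * DY (x + k * s, s))\<bar> \<le> T * (2 * ((p + q) * r powr (p + q - 1)) * B)"
  proof (rule int_bound[OF zt(2,3)])
    show "continuous_on {0..t} (\<lambda>s. G1 p q (X (x, s)) (Y (x + k * s, s)) * DX (x, s) +
      G2 p q (X (x, s)) (Y (x + k * s, s)) * DY (x + k * s, s))"
      using slice_cont[OF integrandD_cont[OF cX cY cDX cDY] zt(3), of x] by simp
    fix s assume "s \<in> {0..t}"
    then have m: "(x, s) \<in> UNIV \<times> {0..T}" "(x + k * s, s) \<in> UNIV \<times> {0..T}" using zt by auto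
    have g: "\<bar>G1 p q (X (x, s)) (Y (x + k * s, s))\<bar> \<le> (p + q) * r powr (p + q - 1)"
      "\<bar>G2 p q (X (x, s)) (Y (x + k * s, s))\<bar> \<le> (p + q) * r powr (p + q - 1)"
      using G12_bound[OF p q bX[OF m(1)] bY[OF m(2)]] by auto
    show "\<bar>G1 p q (X (x, s)) (Y (x + k * s, s)) * DX (x, s) +
      G2 p q (X (x, s)) (Y (x + k * s, s)) * DY (x + k * s, s)\<bar> \<le> 2 * ((p + q) * r powr (p + q - 1)) * B"
      by (rule lin2[OF g bDX[OF m(1)] bDY[OF m(2)]])
  qed
  then show ?thesis using bc[of x] zt by (simp add: opD_def)
qed

lemma opD_diff:
  assumes cX: "continuous_on (UNIV \<times> {0..T}) X" and cY: "continuous_on (UNIV \<times> {0..T}) Y"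
    and cDX: "continuous_on (UNIV \<times> {0..T}) DX" and cDY: "continuous_on (UNIV \<times> {0..T}) DY"
    and cX': "continuous_on (UNIV \<times> {0..T}) X'" and cY': "continuous_on (UNIV \<times> {0..T}) Y'"
    and cDX': "continuous_on (UNIV \<times> {0..T}) DX'" and cDY': "continuous_on (UNIV \<times> {0..T}) DY'"
    and bX: "\<And>z. z \<in> UNIV \<times> {0..T} \<Longrightarrow> \<bar>X z\<bar> \<le> r"
    and bY: "\<And>z. z \<in> UNIV \<times> {0..T} \<Longrightarrow> \<bar>Y z\<bar> \<le> r"
    and bDX': "\<And>z. z \<in> UNIV \<times> {0..T} \<Longrightarrow> \<bar>DX' z\<bar> \<le> B"
    and bDY': "\<And>z. z \<in> UNIV \<times> {0..T} \<Longrightarrow> \<bar>DY' z\<bar> \<le> B"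
    and dDX: "\<And>z. z \<in> UNIV \<times> {0..T} \<Longrightarrow> \<bar>DX z - DX' z\<bar> \<le> d"
    and dDY: "\<And>z. z \<in> UNIV \<times> {0..T} \<Longrightarrow> \<bar>DY z - DY' z\<bar> \<le> d"
    and w1: "\<And>x s. s \<in> {0..T} \<Longrightarrow> \<bar>G1 p q (X (x, s)) (Y (x + k * s, s)) - G1 p q (X' (x, s)) (Y' (x + k * s, s))\<bar> \<le> w"
    and w2: "\<And>x s. s \<in> {0..T} \<Longrightarrow> \<bar>G2 p q (X (x, s)) (Y (x + k * s, s)) - G2 p q (X' (x, s)) (Y' (x + k * s, s))\<bar> \<le> w"
    and z: "z \<in> UNIV \<times> {0..T}"
  shows "\<bar>opD p q k c X Y DX DY z - opD p q k c X' Y' DX' DY' z\<bar>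
           \<le> T * (2 * ((p + q) * r powr (p + q - 1)) * d + 2 * B * w)"
proof -
  obtain x t where zt: "z = (x, t)" "0 \<le> t" "t \<le> T" using z by auto
  let ?f = "\<lambda>s. G1 p q (X (x, s)) (Y (x + k * s, s)) * DX (x, s) +
      G2 p q (X (x, s)) (Y (x + k * s, s)) * DY (x + k * s, s)"
  let ?g = "\<lambda>s. G1 p q (X' (x, s)) (Y' (x + k * s, s)) * DX' (x, s) +
      G2 p q (X' (x, s)) (Y' (x + k * s, s)) * DY' (x + k * s, s)"
  have cf: "continuous_on {0..t} ?f"
    using slice_cont[OF integrandD_cont[OF cX cY cDX cDY] zt(3), of x] by simp
  have cg: "continuous_on {0..t} ?g"
    using slice_cont[OF integrandD_cont[OF cX' cY' cDX' cDY'] zt(3), of x] by simp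
  have "opD p q k c X Y DX DY z - opD p q k c X' Y' DX' DY' z = integral {0..t} (\<lambda>s. ?f s - ?g s)"
    using zt integral_diff[OF integrable_continuous_real[OF cf] integrable_continuous_real[OF cg]]
    by (simp add: opD_def)
  also have "\<bar>\<dots>\<bar> \<le> T * (2 * ((p + q) * r powr (p + q - 1)) * d + 2 * B * w)"
  proof (rule int_bound[OF zt(2,3)])
    show "continuous_on {0..t} (\<lambda>s. ?f s - ?g s)" by (rule continuous_on_diff[OF cf cg])
    fix s assume s: "s \<in> {0..t}"
    then have m: "(x, s) \<in> UNIV \<times> {0..T}" "(x + k * s, s) \<in> UNIV \<times> {0..T}" "s \<in> {0..T}" using zt by auto
    have g: "\<bar>G1 p q (X (x, s)) (Y (x + k * s, s))\<bar> \<le> (p + q) * r powr (p + q - 1)"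
      "\<bar>G2 p q (X (x, s)) (Y (x + k * s, s))\<bar> \<le> (p + q) * r powr (p + q - 1)"
      using G12_bound[OF p q bX[OF m(1)] bY[OF m(2)]] by auto
    show "\<bar>?f s - ?g s\<bar> \<le> 2 * ((p + q) * r powr (p + q - 1)) * d + 2 * B * w"
      by (rule lin4[OF g dDX[OF m(1)] dDY[OF m(2)] bDX'[OF m(1)] bDY'[OF m(2)] w1[OF m(3)] w2[OF m(3)]])
  qed
  finally show ?thesis .
qed

lemma opA_deriv_x:
  assumes t: "0 \<le> t" "t \<le> T"
    and cX: "continuous_on (UNIV \<times> {0..T}) X" and cY: "continuous_on (UNIV \<times> {0..T}) Y"
    and cDX: "continuous_on (UNIV \<times> {0..T}) DX" and cDY: "continuous_on (UNIV \<times> {0..T}) DY"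
    and dc: "\<And>x. (c has_real_derivative c' x) (at x)"
    and dX: "\<And>x s. s \<in> {0..T} \<Longrightarrow> ((\<lambda>x. X (x, s)) has_real_derivative DX (x, s)) (at x)"
    and dY: "\<And>x s. s \<in> {0..T} \<Longrightarrow> ((\<lambda>x. Y (x, s)) has_real_derivative DY (x, s)) (at x)"
  shows "((\<lambda>x. opA p q k c X Y (x, t)) has_real_derivative opD p q k c' X Y DX DY (x, t)) (at x)"
proof -
  let ?fx = "\<lambda>x s. G1 p q (X (x, s)) (Y (x + k * s, s)) * DX (x, s) +
      G2 p q (X (x, s)) (Y (x + k * s, s)) * DY (x + k * s, s)"
  have L: "((\<lambda>x. integral (cbox 0 t) (\<lambda>s. GG p q (X (x, s)) (Y (x + k * s, s)))) has_field_derivative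
      integral (cbox 0 t) (?fx x)) (at x within UNIV)"
  proof (rule leibniz_rule_field_derivative)
    fix x s :: real assume "x \<in> UNIV" "s \<in> cbox 0 t"
    then have s: "s \<in> {0..T}" using t by (auto simp: box_real)
    have dY': "((\<lambda>x. Y (x + k * s, s)) has_real_derivative DY (x + k * s, s) * 1) (at x)"
      by (rule DERIV_chain2[where f="\<lambda>y. Y (y, s)", OF dY[OF s]]) (auto intro!: derivative_eq_intros)
    show "((\<lambda>x. GG p q (X (x, s)) (Y (x + k * s, s))) has_field_derivative ?fx x s) (at x within UNIV)"
      using GG_chain[OF p q dX[OF s] dY'] by simp
  next
    fix x :: real assume "x \<in> UNIV"
    show "(\<lambda>s. GG p q (X (x, s)) (Y (x + k * s, s))) integrable_on cbox 0 t"
      unfolding box_real using slice_cont[OF integrandA_cont[OF cX cY] t(2), of x]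
      by (intro integrable_continuous_real) simp
  next
    have sub: "UNIV \<times> cbox 0 t \<subseteq> UNIV \<times> {0..T}" using t by (auto simp: box_real)
    have "continuous_on (UNIV \<times> cbox 0 t) (\<lambda>z. ?fx (fst z) (snd z))"
      using continuous_on_subset[OF integrandD_cont[OF cX cY cDX cDY] sub] by simp
    then show "continuous_on (UNIV \<times> cbox 0 t) (\<lambda>(x, s). ?fx x s)"
      by (simp add: case_prod_beta')
  qed auto
  show ?thesis
    using DERIV_add[OF dc[of x] L] by (simp add: opA_def opD_def box_real)
qed

lemma opA_deriv_t:
  assumes t: "t \<in> {0..T}"
    and cX: "continuous_on (UNIV \<times> {0..T}) X" and cY: "continuous_on (UNIV \<times> {0..T}) Y"
  shows "((\<lambda>t. opA p q k c X Y (x, t)) has_real_derivative GG p q (X (x, t)) (Y (x + k * t, t))) (at t within {0..T})"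
proof -
  have "((\<lambda>u. integral {0..u} (\<lambda>s. GG p q (X (x, s)) (Y (x + k * s, s)))) has_real_derivative
       GG p q (X (x, t)) (Y (x + k * t, t))) (at t within {0..T})"
    using integral_has_real_derivative[OF _ t, of "\<lambda>s. GG p q (X (x, s)) (Y (x + k * s, s))"]
      slice_cont[OF integrandA_cont[OF cX cY] order_refl, of x] by simp
  then show ?thesis using DERIV_add[OF DERIV_const[of "c x"]] by (simp add: opA_def)
qed

end


lemma geo_cauchy:
  fixes f :: "nat \<Rightarrow> 'a \<Rightarrow> real"
  assumes b: "\<And>n k z. z \<in> X \<Longrightarrow> \<bar>f (n + k) z - f n z\<bar> \<le> C * (1/2)^n" and C: "C \<ge> 0"
  shows "uniformly_Cauchy_on X f"
  unfolding uniformly_Cauchy_on_def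
proof (intro allI impI)
  fix e :: real assume e: "e > 0"
  obtain N where N: "(1/2::real)^N < e / (2 * C + 1)"
    using real_arch_pow_inv[of "e / (2 * C + 1)" "1/2"] e C by auto
  have "2 * C * (1/2::real)^N \<le> (2 * C + 1) * (1/2)^N" by (simp add: mult_right_mono)
  also have "\<dots> < e" using N C by (simp add: field_simps)
  finally have NN: "2 * C * (1/2::real)^N < e" .
  show "\<exists>M. \<forall>x\<in>X. \<forall>m\<ge>M. \<forall>n\<ge>M. dist (f m x) (f n x) < e"
  proof (intro exI[of _ N] ballI allI impI)
    fix x m n assume x: "x \<in> X" and mn: "N \<le> m" "N \<le> n"
    have 1: "\<bar>f m x - f N x\<bar> \<le> C * (1/2)^N" using b[OF x, of N "m - N"] mn by simp
    have 2: "\<bar>f n x - f N x\<bar> \<le> C * (1/2)^N" using b[OF x, of N "n - N"] mn by simp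
    show "dist (f m x) (f n x) < e" unfolding dist_real_def using 1 2 NN by linarith
  qed
qed

locale iterset =
  fixes p q T M M' :: real and a0 b0 da0 db0 :: "real \<Rightarrow> real"
  assumes p: "p > 1" and q: "q > 1" and T: "T \<ge> 0" and M: "M > 0" and M': "M' \<ge> 0"
    and da: "\<And>x. (a0 has_real_derivative da0 x) (at x)"
    and db: "\<And>x. (b0 has_real_derivative db0 x) (at x)"
    and cda: "continuous_on UNIV da0" and cdb: "continuous_on UNIV db0"
    and ba: "\<And>x. \<bar>a0 x\<bar> \<le> M" and bb: "\<And>x. \<bar>b0 x\<bar> \<le> M"
    and bda: "\<And>x. \<bar>da0 x\<bar> \<le> M'" and bdb: "\<And>x. \<bar>db0 x\<bar> \<le> M'"
    and small1: "T * (2 * M) powr (p + q) \<le> M"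
    and small2: "T * ((p + q) * (2 * M) powr (p + q - 1)) \<le> 1/4"
begin

abbreviation "Z \<equiv> (UNIV \<times> {0..T}) :: (real \<times> real) set"
definition "r = 2 * M"
definition "L = (p + q) * r powr (p + q - 1)"

lemma TL: "T * L \<le> 1/4" using small2 by (simp add: L_def r_def)
lemma L0: "L \<ge> 0" using p q by (simp add: L_def)
lemma TL0: "T * L \<ge> 0" using T L0 by simp

lemma ca: "continuous_on UNIV a0"
  using da by (intro continuous_at_imp_continuous_on) (auto intro: DERIV_isCont)
lemma cb: "continuous_on UNIV b0"
  using db by (intro continuous_at_imp_continuous_on) (auto intro: DERIV_isCont)

primrec seq :: "nat \<Rightarrow> (real\<times>real \<Rightarrow> real) \<times> (real\<times>real \<Rightarrow> real) \<times> (real\<times>real \<Rightarrow> real) \<times> (real\<times>real \<Rightarrow> real)" where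
  "seq 0 = (\<lambda>z. 0, \<lambda>z. 0, \<lambda>z. 0, \<lambda>z. 0)"
| "seq (Suc n) = (case seq n of (A, B, P, Q) \<Rightarrow>
     (opA p q (-2) a0 A B, opA p q 2 b0 B A, opD p q (-2) da0 A B P Q, opD p q 2 db0 B A Q P))"

definition "AA n = fst (seq n)"
definition "BB n = fst (snd (seq n))"
definition "PP n = fst (snd (snd (seq n)))"
definition "QQ n = snd (snd (snd (seq n)))"

lemma seq_0: "AA 0 = (\<lambda>z. 0)" "BB 0 = (\<lambda>z. 0)" "PP 0 = (\<lambda>z. 0)" "QQ 0 = (\<lambda>z. 0)"
  by (simp_all add: AA_def BB_def PP_def QQ_def)

lemma seq_Suc:
  "AA (Suc n) = opA p q (-2) a0 (AA n) (BB n)"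
  "BB (Suc n) = opA p q 2 b0 (BB n) (AA n)"
  "PP (Suc n) = opD p q (-2) da0 (AA n) (BB n) (PP n) (QQ n)"
  "QQ (Suc n) = opD p q 2 db0 (BB n) (AA n) (QQ n) (PP n)"
  by (simp_all add: AA_def BB_def PP_def QQ_def split: prod.split)

lemma inv:
  "continuous_on Z (AA n) \<and> continuous_on Z (BB n) \<and> continuous_on Z (PP n) \<and> continuous_on Z (QQ n) \<and>
   (\<forall>z\<in>Z. \<bar>AA n z\<bar> \<le> r \<and> \<bar>BB n z\<bar> \<le> r \<and> \<bar>PP n z\<bar> \<le> 2 * M' \<and> \<bar>QQ n z\<bar> \<le> 2 * M') \<and>
   (\<forall>x. \<forall>s\<in>{0..T}. ((\<lambda>x. AA n (x, s)) has_real_derivative PP n (x, s)) (at x) \<and>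
                     ((\<lambda>x. BB n (x, s)) has_real_derivative QQ n (x, s)) (at x))"
proof (induction n)
  case 0
  show ?case using M M' by (simp add: seq_0 r_def)
next
  case (Suc n)
  then have c: "continuous_on Z (AA n)" "continuous_on Z (BB n)" "continuous_on Z (PP n)" "continuous_on Z (QQ n)"
    and bA: "\<And>z. z \<in> Z \<Longrightarrow> \<bar>AA n z\<bar> \<le> r" and bB: "\<And>z. z \<in> Z \<Longrightarrow> \<bar>BB n z\<bar> \<le> r"
    and bP: "\<And>z. z \<in> Z \<Longrightarrow> \<bar>PP n z\<bar> \<le> 2 * M'" and bQ: "\<And>z. z \<in> Z \<Longrightarrow> \<bar>QQ n z\<bar> \<le> 2 * M'"
    and dA: "\<And>x s. s \<in> {0..T} \<Longrightarrow> ((\<lambda>x. AA n (x, s)) has_real_derivative PP n (x, s)) (at x)"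
    and dB: "\<And>x s. s \<in> {0..T} \<Longrightarrow> ((\<lambda>x. BB n (x, s)) has_real_derivative QQ n (x, s)) (at x)"
    by auto
  have r1: "M + T * r powr (p + q) \<le> r" using small1 by (simp add: r_def)
  have r2: "M' + T * (2 * L * (2 * M')) \<le> 2 * M'"
  proof -
    have "T * (2 * L * (2 * M')) = (T * L) * (4 * M')" by (simp add: algebra_simps)
    also have "\<dots> \<le> 1/4 * (4 * M')" using TL M' by (intro mult_right_mono) auto
    finally show ?thesis by simp
  qed
  have Lr: "(p + q) * r powr (p + q - 1) = L" by (simp add: L_def)
  show ?case unfolding seq_Suc
  proof (intro conjI ballI allI)
    show "continuous_on Z (opA p q (-2) a0 (AA n) (BB n))" by (rule opA_cont[OF p q ca c(1,2)])
    show "continuous_on Z (opA p q 2 b0 (BB n) (AA n))" by (rule opA_cont[OF p q cb c(2,1)])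
    show "continuous_on Z (opD p q (-2) da0 (AA n) (BB n) (PP n) (QQ n))" by (rule opD_cont[OF p q cda c])
    show "continuous_on Z (opD p q 2 db0 (BB n) (AA n) (QQ n) (PP n))" by (rule opD_cont[OF p q cdb c(2,1,4,3)])
    fix z assume z: "z \<in> Z"
    show "\<bar>opA p q (-2) a0 (AA n) (BB n) z\<bar> \<le> r"
      using opA_bound[where c=a0 and k="-2", OF p q c(1,2) bA bB ba z] r1 by linarith
    show "\<bar>opA p q 2 b0 (BB n) (AA n) z\<bar> \<le> r"
      using opA_bound[where c=b0 and k="2", OF p q c(2,1) bB bA bb z] r1 by linarith
    show "\<bar>opD p q (-2) da0 (AA n) (BB n) (PP n) (QQ n) z\<bar> \<le> 2 * M'"
      using opD_bound[where c=da0 and k="-2", OF p q c bA bB bP bQ bda z] r2 unfolding Lr by linarith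
    show "\<bar>opD p q 2 db0 (BB n) (AA n) (QQ n) (PP n) z\<bar> \<le> 2 * M'"
      using opD_bound[where c=db0 and k="2", OF p q c(2,1,4,3) bB bA bQ bP bdb z] r2 unfolding Lr by linarith
  next
    fix x s assume s: "s \<in> {0..T}"
    show "((\<lambda>x. opA p q (-2) a0 (AA n) (BB n) (x, s)) has_real_derivative opD p q (-2) da0 (AA n) (BB n) (PP n) (QQ n) (x, s)) (at x)"
      using s by (intro opA_deriv_x[OF p q _ _ c da dA dB]) auto
    show "((\<lambda>x. opA p q 2 b0 (BB n) (AA n) (x, s)) has_real_derivative opD p q 2 db0 (BB n) (AA n) (QQ n) (PP n) (x, s)) (at x)"
      using s by (intro opA_deriv_x[OF p q _ _ c(2,1,4,3) db dB dA]) auto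
  qed
qed


lemma cAA: "continuous_on Z (AA n)" and cBB: "continuous_on Z (BB n)"
  and cPP: "continuous_on Z (PP n)" and cQQ: "continuous_on Z (QQ n)"
  using inv[of n] by auto
lemma bAA: "z \<in> Z \<Longrightarrow> \<bar>AA n z\<bar> \<le> r" and bBB: "z \<in> Z \<Longrightarrow> \<bar>BB n z\<bar> \<le> r"
  and bPP: "z \<in> Z \<Longrightarrow> \<bar>PP n z\<bar> \<le> 2 * M'" and bQQ: "z \<in> Z \<Longrightarrow> \<bar>QQ n z\<bar> \<le> 2 * M'"
  using inv[of n] by auto
lemma dAA: "s \<in> {0..T} \<Longrightarrow> ((\<lambda>x. AA n (x, s)) has_real_derivative PP n (x, s)) (at x)"
  and dBB: "s \<in> {0..T} \<Longrightarrow> ((\<lambda>x. BB n (x, s)) has_real_derivative QQ n (x, s)) (at x)"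
  using inv[of n] by auto

lemma r0: "r > 0" using M by (simp add: r_def)

lemma contr: "z \<in> Z \<Longrightarrow> \<bar>AA (Suc n) z - AA n z\<bar> \<le> 2 * r * (1/2)^n \<and> \<bar>BB (Suc n) z - BB n z\<bar> \<le> 2 * r * (1/2)^n"
proof (induction n arbitrary: z)
  case 0
  then show ?case using bAA[of z 1] bBB[of z 1] r0 by (simp add: seq_0)
next
  case (Suc n)
  define d where "d = 2 * r * (1/2::real)^n"
  have d0: "d \<ge> 0" using r0 by (simp add: d_def)
  have hA: "\<And>z. z \<in> Z \<Longrightarrow> \<bar>AA (Suc n) z - AA n z\<bar> \<le> d" and hB: "\<And>z. z \<in> Z \<Longrightarrow> \<bar>BB (Suc n) z - BB n z\<bar> \<le> d"
    using Suc.IH by (auto simp: d_def)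
  have key: "T * ((p + q) * r powr (p + q - 1) * (2 * d)) \<le> 2 * r * (1/2)^Suc n"
  proof -
    have "T * ((p + q) * r powr (p + q - 1) * (2 * d)) = (T * L) * (2 * d)" by (simp add: L_def)
    also have "\<dots> \<le> 1/4 * (2 * d)" using TL d0 by (intro mult_right_mono) auto
    also have "\<dots> = 2 * r * (1/2)^Suc n" by (simp add: d_def)
    finally show ?thesis .
  qed
  have e: "AA (Suc (Suc n)) z = opA p q (- 2) a0 (AA (Suc n)) (BB (Suc n)) z"
    "AA (Suc n) z = opA p q (- 2) a0 (AA n) (BB n) z"
    "BB (Suc (Suc n)) z = opA p q 2 b0 (BB (Suc n)) (AA (Suc n)) z"
    "BB (Suc n) z = opA p q 2 b0 (BB n) (AA n) z"
    by (rule fun_cong[OF seq_Suc(1)] fun_cong[OF seq_Suc(2)])+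
  show ?case
    using opA_lip[where c=a0 and k="-2", OF p q cAA cBB cAA cBB bAA bBB bAA bBB hA hB Suc.prems]
      opA_lip[where c=b0 and k="2", OF p q cBB cAA cBB cAA bBB bAA bBB bAA hB hA Suc.prems] key e
    by linarith
qed

lemma cauchy_AB: "z \<in> Z \<Longrightarrow> \<bar>AA (n + k) z - AA n z\<bar> \<le> 4 * r * (1/2)^n - 4 * r * (1/2)^(n+k) \<and>
                             \<bar>BB (n + k) z - BB n z\<bar> \<le> 4 * r * (1/2)^n - 4 * r * (1/2)^(n+k)"
proof (induction k)
  case 0 then show ?case by simp
next
  case (Suc k)
  have e: "4 * r * (1/2)^n - 4 * r * (1/2)^(n+k) + 2 * r * (1/2)^(n+k) = 4 * r * (1/2)^n - 4 * r * (1/2)^(n + Suc k)"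
    by simp
  show ?case using Suc contr[OF Suc.prems, of "n + k"] e by auto
qed

lemma ucA: "uniformly_Cauchy_on Z AA" and ucB: "uniformly_Cauchy_on Z BB"
proof -
  have "\<bar>AA (n + k) z - AA n z\<bar> \<le> 4 * r * (1/2)^n" "\<bar>BB (n + k) z - BB n z\<bar> \<le> 4 * r * (1/2)^n"
    if "z \<in> Z" for n k z
    using cauchy_AB[OF that, of n k] r0 by (auto intro: order_trans)
  then show "uniformly_Cauchy_on Z AA" "uniformly_Cauchy_on Z BB"
    using r0 by (auto intro!: geo_cauchy[where C="4 * r"])
qed

lemma omega:
  assumes eta: "\<eta> > 0"
  shows "\<exists>N. \<forall>n\<ge>N. \<forall>m\<ge>N. \<forall>z1\<in>Z. \<forall>z2\<in>Z.
     \<bar>G1 p q (AA n z1) (BB n z2) - G1 p q (AA m z1) (BB m z2)\<bar> \<le> \<eta> \<and>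
     \<bar>G2 p q (AA n z1) (BB n z2) - G2 p q (AA m z1) (BB m z2)\<bar> \<le> \<eta> \<and>
     \<bar>G1 p q (BB n z1) (AA n z2) - G1 p q (BB m z1) (AA m z2)\<bar> \<le> \<eta> \<and>
     \<bar>G2 p q (BB n z1) (AA n z2) - G2 p q (BB m z1) (AA m z2)\<bar> \<le> \<eta>"
proof -
  obtain d where d: "d > 0" and dd: "\<And>a b a' b'. \<bar>a\<bar> \<le> r \<Longrightarrow> \<bar>b\<bar> \<le> r \<Longrightarrow> \<bar>a'\<bar> \<le> r \<Longrightarrow> \<bar>b'\<bar> \<le> r \<Longrightarrow>
           \<bar>a - a'\<bar> < d \<Longrightarrow> \<bar>b - b'\<bar> < d \<Longrightarrow>
           \<bar>G1 p q a b - G1 p q a' b'\<bar> < \<eta> \<and> \<bar>G2 p q a b - G2 p q a' b'\<bar> < \<eta>"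
    using G12_unif[OF p q eta, of r] by blast
  obtain N1 where N1: "\<And>x m n. x \<in> Z \<Longrightarrow> m \<ge> N1 \<Longrightarrow> n \<ge> N1 \<Longrightarrow> dist (AA m x) (AA n x) < d"
    using ucA d unfolding uniformly_Cauchy_on_def by metis
  obtain N2 where N2: "\<And>x m n. x \<in> Z \<Longrightarrow> m \<ge> N2 \<Longrightarrow> n \<ge> N2 \<Longrightarrow> dist (BB m x) (BB n x) < d"
    using ucB d unfolding uniformly_Cauchy_on_def by metis
  show ?thesis
  proof (intro exI[of _ "max N1 N2"] allI impI ballI)
    fix n m z1 z2 assume nm: "max N1 N2 \<le> n" "max N1 N2 \<le> m" and z: "z1 \<in> Z" "z2 \<in> Z"
    have a1: "\<bar>AA n z1 - AA m z1\<bar> < d" "\<bar>AA n z2 - AA m z2\<bar> < d"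
      using N1[OF z(1), of n m] N1[OF z(2), of n m] nm by (auto simp: dist_real_def)
    have b1: "\<bar>BB n z1 - BB m z1\<bar> < d" "\<bar>BB n z2 - BB m z2\<bar> < d"
      using N2[OF z(1), of n m] N2[OF z(2), of n m] nm by (auto simp: dist_real_def)
    have X: "\<bar>G1 p q (AA n z1) (BB n z2) - G1 p q (AA m z1) (BB m z2)\<bar> < \<eta> \<and>
             \<bar>G2 p q (AA n z1) (BB n z2) - G2 p q (AA m z1) (BB m z2)\<bar> < \<eta>"
      by (rule dd[OF bAA[OF z(1)] bBB[OF z(2)] bAA[OF z(1)] bBB[OF z(2)] a1(1) b1(2)])
    have Y: "\<bar>G1 p q (BB n z1) (AA n z2) - G1 p q (BB m z1) (AA m z2)\<bar> < \<eta> \<and>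
             \<bar>G2 p q (BB n z1) (AA n z2) - G2 p q (BB m z1) (AA m z2)\<bar> < \<eta>"
      by (rule dd[OF bBB[OF z(1)] bAA[OF z(2)] bBB[OF z(1)] bAA[OF z(2)] b1(1) a1(2)])
    show "\<bar>G1 p q (AA n z1) (BB n z2) - G1 p q (AA m z1) (BB m z2)\<bar> \<le> \<eta> \<and>
     \<bar>G2 p q (AA n z1) (BB n z2) - G2 p q (AA m z1) (BB m z2)\<bar> \<le> \<eta> \<and>
     \<bar>G1 p q (BB n z1) (AA n z2) - G1 p q (BB m z1) (AA m z2)\<bar> \<le> \<eta> \<and>
     \<bar>G2 p q (BB n z1) (AA n z2) - G2 p q (BB m z1) (AA m z2)\<bar> \<le> \<eta>"
      using X Y by auto
  qed
qed


lemma pq_aux: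
  assumes eta: "\<eta> \<ge> 0"
    and N: "\<forall>n\<ge>N. \<forall>m\<ge>N. \<forall>z1\<in>Z. \<forall>z2\<in>Z.
     \<bar>G1 p q (AA n z1) (BB n z2) - G1 p q (AA m z1) (BB m z2)\<bar> \<le> \<eta> \<and>
     \<bar>G2 p q (AA n z1) (BB n z2) - G2 p q (AA m z1) (BB m z2)\<bar> \<le> \<eta> \<and>
     \<bar>G1 p q (BB n z1) (AA n z2) - G1 p q (BB m z1) (AA m z2)\<bar> \<le> \<eta> \<and>
     \<bar>G2 p q (BB n z1) (AA n z2) - G2 p q (BB m z1) (AA m z2)\<bar> \<le> \<eta>"
    and nm: "n \<ge> N" "m \<ge> N"
  shows "z \<in> Z \<Longrightarrow> \<bar>PP (n + k) z - PP (m + k) z\<bar> \<le> 4 * M' * (1/2)^k + 8 * T * M' * \<eta> \<and>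
                    \<bar>QQ (n + k) z - QQ (m + k) z\<bar> \<le> 4 * M' * (1/2)^k + 8 * T * M' * \<eta>"
proof (induction k arbitrary: z)
  case 0
  then show ?case using bPP[of z n] bPP[of z m] bQQ[of z n] bQQ[of z m] T M' eta
    by (simp add: abs_le_iff) (smt (verit) mult_nonneg_nonneg)
next
  case (Suc k)
  define D where "D = 4 * M' * (1/2::real)^k + 8 * T * M' * \<eta>"
  have D0: "D \<ge> 0" using M' T eta by (simp add: D_def)
  have hP: "\<And>z. z \<in> Z \<Longrightarrow> \<bar>PP (n + k) z - PP (m + k) z\<bar> \<le> D"
    and hQ: "\<And>z. z \<in> Z \<Longrightarrow> \<bar>QQ (n + k) z - QQ (m + k) z\<bar> \<le> D"
    using Suc.IH by (auto simp: D_def)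
  have mem: "(x, s) \<in> Z" "(x + c * s, s) \<in> Z" if "s \<in> {0..T}" for x s c :: real using that by auto
  have Nk: "n + k \<ge> N" "m + k \<ge> N" using nm by auto
  have w: "\<bar>G1 p q (AA (n+k) (x, s)) (BB (n+k) (x + c * s, s)) - G1 p q (AA (m+k) (x, s)) (BB (m+k) (x + c * s, s))\<bar> \<le> \<eta>"
    "\<bar>G2 p q (AA (n+k) (x, s)) (BB (n+k) (x + c * s, s)) - G2 p q (AA (m+k) (x, s)) (BB (m+k) (x + c * s, s))\<bar> \<le> \<eta>"
    "\<bar>G1 p q (BB (n+k) (x, s)) (AA (n+k) (x + c * s, s)) - G1 p q (BB (m+k) (x, s)) (AA (m+k) (x + c * s, s))\<bar> \<le> \<eta>"
    "\<bar>G2 p q (BB (n+k) (x, s)) (AA (n+k) (x + c * s, s)) - G2 p q (BB (m+k) (x, s)) (AA (m+k) (x + c * s, s))\<bar> \<le> \<eta>"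
    if "s \<in> {0..T}" for x s c :: real
  proof -
    have "(x, s) \<in> Z" "(x + c * s, s) \<in> Z" using that by auto
    then show "\<bar>G1 p q (AA (n+k) (x, s)) (BB (n+k) (x + c * s, s)) - G1 p q (AA (m+k) (x, s)) (BB (m+k) (x + c * s, s))\<bar> \<le> \<eta>"
    "\<bar>G2 p q (AA (n+k) (x, s)) (BB (n+k) (x + c * s, s)) - G2 p q (AA (m+k) (x, s)) (BB (m+k) (x + c * s, s))\<bar> \<le> \<eta>"
    "\<bar>G1 p q (BB (n+k) (x, s)) (AA (n+k) (x + c * s, s)) - G1 p q (BB (m+k) (x, s)) (AA (m+k) (x + c * s, s))\<bar> \<le> \<eta>"
    "\<bar>G2 p q (BB (n+k) (x, s)) (AA (n+k) (x + c * s, s)) - G2 p q (BB (m+k) (x, s)) (AA (m+k) (x + c * s, s))\<bar> \<le> \<eta>"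
      using N Nk by blast+
  qed
  have key: "T * (2 * ((p + q) * r powr (p + q - 1)) * D + 2 * (2 * M') * \<eta>) \<le> 4 * M' * (1/2)^Suc k + 8 * T * M' * \<eta>"
  proof -
    have "T * (2 * ((p + q) * r powr (p + q - 1)) * D + 2 * (2 * M') * \<eta>) = 2 * (T * L) * D + 4 * T * M' * \<eta>"
      by (simp add: L_def algebra_simps)
    also have "\<dots> \<le> 2 * (1/4) * D + 4 * T * M' * \<eta>" using TL D0 by (intro add_right_mono mult_right_mono) auto
    also have "\<dots> = 4 * M' * (1/2)^Suc k + 8 * T * M' * \<eta>" by (simp add: D_def algebra_simps)
    finally show ?thesis .
  qed
  have eP: "PP (n + Suc k) z = opD p q (-2) da0 (AA (n+k)) (BB (n+k)) (PP (n+k)) (QQ (n+k)) z"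
    "PP (m + Suc k) z = opD p q (-2) da0 (AA (m+k)) (BB (m+k)) (PP (m+k)) (QQ (m+k)) z"
    "QQ (n + Suc k) z = opD p q 2 db0 (BB (n+k)) (AA (n+k)) (QQ (n+k)) (PP (n+k)) z"
    "QQ (m + Suc k) z = opD p q 2 db0 (BB (m+k)) (AA (m+k)) (QQ (m+k)) (PP (m+k)) z"
    by (simp_all add: seq_Suc)
  show ?case
    using opD_diff[where c=da0 and k="-2", OF p q cAA cBB cPP cQQ cAA cBB cPP cQQ bAA bBB bPP bQQ hP hQ w(1) w(2) Suc.prems]
      opD_diff[where c=db0 and k="2", OF p q cBB cAA cQQ cPP cBB cAA cQQ cPP bBB bAA bQQ bPP hQ hP w(3) w(4) Suc.prems]
      key eP by linarith
qed

lemma ucPQ: "uniformly_Cauchy_on Z PP \<and> uniformly_Cauchy_on Z QQ"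
proof -
  have main: "\<exists>N. \<forall>x\<in>Z. \<forall>m\<ge>N. \<forall>n\<ge>N. dist (PP m x) (PP n x) < e \<and> dist (QQ m x) (QQ n x) < e" if e: "e > 0" for e
  proof -
    define \<eta> where "\<eta> = e / (32 * (T * M' + 1))"
    have TM: "T * M' \<ge> 0" using T M' by simp
    have eta: "\<eta> > 0" using e TM by (simp add: \<eta>_def)
    have eta2: "8 * T * M' * \<eta> \<le> e / 4"
    proof -
      have "8 * T * M' * \<eta> = e / 4 * (T * M' / (T * M' + 1))" using TM by (simp add: \<eta>_def field_simps)
      also have "\<dots> \<le> e / 4 * 1" using TM e by (intro mult_left_mono) auto
      finally show ?thesis by simp
    qed
    obtain N where N: "\<forall>n\<ge>N. \<forall>m\<ge>N. \<forall>z1\<in>Z. \<forall>z2\<in>Z.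
     \<bar>G1 p q (AA n z1) (BB n z2) - G1 p q (AA m z1) (BB m z2)\<bar> \<le> \<eta> \<and>
     \<bar>G2 p q (AA n z1) (BB n z2) - G2 p q (AA m z1) (BB m z2)\<bar> \<le> \<eta> \<and>
     \<bar>G1 p q (BB n z1) (AA n z2) - G1 p q (BB m z1) (AA m z2)\<bar> \<le> \<eta> \<and>
     \<bar>G2 p q (BB n z1) (AA n z2) - G2 p q (BB m z1) (AA m z2)\<bar> \<le> \<eta>"
      using omega[OF eta] by blast
    obtain k where k: "(1/2::real)^k < e / (16 * (M' + 1))"
      using real_arch_pow_inv[of "e / (16 * (M' + 1))" "1/2"] e M' by auto
    have k2: "4 * M' * (1/2::real)^k < e / 2"
    proof -
      have "4 * M' * (1/2::real)^k \<le> 4 * (M' + 1) * (1/2)^k" by (simp add: mult_right_mono)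
      also have "\<dots> < 4 * (M' + 1) * (e / (16 * (M' + 1)))" using k M' by (intro mult_strict_left_mono) auto
      also have "\<dots> = e / 4" using M' by (simp add: field_simps)
      finally show ?thesis using e by simp
    qed
    show ?thesis
    proof (intro exI[of _ "N + k"] ballI allI impI)
      fix x m n assume x: "x \<in> Z" and mn: "N + k \<le> m" "N + k \<le> n"
      have "\<bar>PP (m - k + k) x - PP (n - k + k) x\<bar> \<le> 4 * M' * (1/2)^k + 8 * T * M' * \<eta> \<and>
            \<bar>QQ (m - k + k) x - QQ (n - k + k) x\<bar> \<le> 4 * M' * (1/2)^k + 8 * T * M' * \<eta>"
        using pq_aux[OF less_imp_le[OF eta] N, of "m - k" "n - k" x k] mn x by auto
      then show "dist (PP m x) (PP n x) < e \<and> dist (QQ m x) (QQ n x) < e"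
        using mn k2 eta2 e by (simp add: dist_real_def)
    qed
  qed
  show ?thesis unfolding uniformly_Cauchy_on_def
  proof safe
    fix e :: real assume "e > 0"
    then show "\<exists>N. \<forall>x\<in>Z. \<forall>m\<ge>N. \<forall>n\<ge>N. dist (PP m x) (PP n x) < e" using main by meson
  next
    fix e :: real assume "e > 0"
    then show "\<exists>N. \<forall>x\<in>Z. \<forall>m\<ge>N. \<forall>n\<ge>N. dist (QQ m x) (QQ n x) < e" using main by meson
  qed
qed


definition "Alim = (SOME l. uniform_limit Z AA l sequentially)"
definition "Blim = (SOME l. uniform_limit Z BB l sequentially)"
definition "Plim = (SOME l. uniform_limit Z PP l sequentially)"
definition "Qlim = (SOME l. uniform_limit Z QQ l sequentially)"

lemma ulA: "uniform_limit Z AA Alim sequentially"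
  using Cauchy_uniformly_convergent[OF ucA] unfolding uniformly_convergent_on_def Alim_def by (rule someI_ex)
lemma ulB: "uniform_limit Z BB Blim sequentially"
  using Cauchy_uniformly_convergent[OF ucB] unfolding uniformly_convergent_on_def Blim_def by (rule someI_ex)
lemma ulP: "uniform_limit Z PP Plim sequentially"
  using Cauchy_uniformly_convergent ucPQ unfolding uniformly_convergent_on_def Plim_def by (metis someI_ex)
lemma ulQ: "uniform_limit Z QQ Qlim sequentially"
  using Cauchy_uniformly_convergent ucPQ unfolding uniformly_convergent_on_def Qlim_def by (metis someI_ex)

lemma cAlim: "continuous_on Z Alim" and cBlim: "continuous_on Z Blim"
  and cPlim: "continuous_on Z Plim" and cQlim: "continuous_on Z Qlim"
  by (rule uniform_limit_theorem[OF always_eventually[OF allI] _ trivial_limit_sequentially];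
      (rule cAA cBB cPP cQQ ulA ulB ulP ulQ))+

lemma bAlim: "z \<in> Z \<Longrightarrow> \<bar>Alim z\<bar> \<le> r"
  by (rule LIMSEQ_le_const2[OF tendsto_rabs[OF tendsto_uniform_limitI[OF ulA]]]) (auto intro: bAA)
lemma bBlim: "z \<in> Z \<Longrightarrow> \<bar>Blim z\<bar> \<le> r"
  by (rule LIMSEQ_le_const2[OF tendsto_rabs[OF tendsto_uniform_limitI[OF ulB]]]) (auto intro: bBB)

lemma opA_limit:
  fixes k :: real and c :: "real \<Rightarrow> real" and X Y :: "nat \<Rightarrow> real \<times> real \<Rightarrow> real" and X0 Y0
  assumes uX: "uniform_limit Z X X0 sequentially" and uY: "uniform_limit Z Y Y0 sequentially"
    and cX: "\<And>n. continuous_on Z (X n)" and cY: "\<And>n. continuous_on Z (Y n)"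
    and cX0: "continuous_on Z X0" and cY0: "continuous_on Z Y0"
    and bX: "\<And>n z. z \<in> Z \<Longrightarrow> \<bar>X n z\<bar> \<le> r" and bY: "\<And>n z. z \<in> Z \<Longrightarrow> \<bar>Y n z\<bar> \<le> r"
    and bX0: "\<And>z. z \<in> Z \<Longrightarrow> \<bar>X0 z\<bar> \<le> r" and bY0: "\<And>z. z \<in> Z \<Longrightarrow> \<bar>Y0 z\<bar> \<le> r"
    and z: "z \<in> Z"
  shows "(\<lambda>n. opA p q k c (X n) (Y n) z) \<longlonglongrightarrow> opA p q k c X0 Y0 z"
proof (rule tendstoI)
  fix e :: real assume e: "e > 0"
  have "\<forall>\<^sub>F n in sequentially. (\<forall>x\<in>Z. dist (X n x) (X0 x) < e) \<and> (\<forall>x\<in>Z. dist (Y n x) (Y0 x) < e)"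
    using uX uY e unfolding uniform_limit_iff by (auto intro: eventually_conj)
  then show "\<forall>\<^sub>F n in sequentially. dist (opA p q k c (X n) (Y n) z) (opA p q k c X0 Y0 z) < e"
  proof eventually_elim
    case (elim n)
    have "\<bar>opA p q k c (X n) (Y n) z - opA p q k c X0 Y0 z\<bar> \<le> T * ((p + q) * r powr (p + q - 1) * (2 * e))"
      using elim by (intro opA_lip[OF p q cX cY cX0 cY0 bX bY bX0 bY0 _ _ z]) (auto simp: dist_real_def less_imp_le)
    also have "\<dots> = (T * L) * (2 * e)" by (simp add: L_def)
    also have "\<dots> \<le> 1/4 * (2 * e)" using TL e by (intro mult_right_mono) auto
    also have "\<dots> < e" using e by simp
    finally show ?case by (simp add: dist_real_def)
  qed
qed

lemma fixA: "z \<in> Z \<Longrightarrow> Alim z = opA p q (-2) a0 Alim Blim z"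
proof -
  assume z: "z \<in> Z"
  have 1: "(\<lambda>n. AA (Suc n) z) \<longlonglongrightarrow> Alim z"
    using LIMSEQ_Suc[OF tendsto_uniform_limitI[OF ulA z]] .
  have 2: "(\<lambda>n. AA (Suc n) z) \<longlonglongrightarrow> opA p q (-2) a0 Alim Blim z"
    unfolding seq_Suc
    by (rule opA_limit[OF ulA ulB cAA cBB cAlim cBlim bAA bBB bAlim bBlim z])
  show ?thesis using LIMSEQ_unique[OF 1 2] .
qed

lemma fixB: "z \<in> Z \<Longrightarrow> Blim z = opA p q 2 b0 Blim Alim z"
proof -
  assume z: "z \<in> Z"
  have 1: "(\<lambda>n. BB (Suc n) z) \<longlonglongrightarrow> Blim z"
    using LIMSEQ_Suc[OF tendsto_uniform_limitI[OF ulB z]] .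
  have 2: "(\<lambda>n. BB (Suc n) z) \<longlonglongrightarrow> opA p q 2 b0 Blim Alim z"
    unfolding seq_Suc
    by (rule opA_limit[OF ulB ulA cBB cAA cBlim cAlim bBB bAA bBlim bAlim z])
  show ?thesis using LIMSEQ_unique[OF 1 2] .
qed

lemma deriv_limit:
  fixes X DX :: "nat \<Rightarrow> real \<times> real \<Rightarrow> real" and X0 DX0
  assumes uX: "uniform_limit Z X X0 sequentially" and uD: "uniform_limit Z DX DX0 sequentially"
    and d: "\<And>n x. ((\<lambda>x. X n (x, t)) has_real_derivative DX n (x, t)) (at x)"
    and t: "t \<in> {0..T}"
  shows "((\<lambda>x. X0 (x, t)) has_real_derivative DX0 (x, t)) (at x)"
proof -
  have mem: "(y, t) \<in> Z" for y using t by auto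
  have "\<exists>g. \<forall>y\<in>UNIV. (\<lambda>n. X n (y, t)) \<longlonglongrightarrow> g y \<and> (g has_derivative (*) (DX0 (y, t))) (at y within UNIV)"
  proof (rule has_derivative_sequence[where f'="\<lambda>n y. (*) (DX n (y, t))"])
    show "convex (UNIV :: real set)" by simp
    show "\<And>n y. y \<in> UNIV \<Longrightarrow> ((\<lambda>y. X n (y, t)) has_derivative (*) (DX n (y, t))) (at y within UNIV)"
      using d by (simp add: has_field_derivative_def)
    show "(\<lambda>n. X n (x, t)) \<longlonglongrightarrow> X0 (x, t)" by (rule tendsto_uniform_limitI[OF uX mem])
    show "x \<in> UNIV" by simp
    fix e :: real assume e: "e > 0"
    have "\<forall>\<^sub>F n in sequentially. \<forall>z\<in>Z. dist (DX n z) (DX0 z) < e"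
      using uD e unfolding uniform_limit_iff by auto
    then show "\<forall>\<^sub>F n in sequentially. \<forall>y\<in>UNIV. \<forall>h. norm (DX n (y, t) * h - DX0 (y, t) * h) \<le> e * norm h"
    proof eventually_elim
      case (elim n)
      show ?case
      proof (intro ballI allI)
        fix y h
        have "\<bar>DX n (y, t) - DX0 (y, t)\<bar> \<le> e" using elim mem[of y] by (auto simp: dist_real_def less_imp_le)
        then have "\<bar>DX n (y, t) - DX0 (y, t)\<bar> * \<bar>h\<bar> \<le> e * \<bar>h\<bar>" by (intro mult_right_mono) auto
        then show "norm (DX n (y, t) * h - DX0 (y, t) * h) \<le> e * norm h"
          by (simp add: left_diff_distrib[symmetric] abs_mult)
      qed
    qed
  qed
  then obtain g where g: "\<And>y. (\<lambda>n. X n (y, t)) \<longlonglongrightarrow> g y" "\<And>y. (g has_derivative (*) (DX0 (y, t))) (at y)"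
    by auto
  have "g y = X0 (y, t)" for y using LIMSEQ_unique[OF g(1) tendsto_uniform_limitI[OF uX mem]] .
  then have "g = (\<lambda>y. X0 (y, t))" by auto
  then show ?thesis using g(2)[of x] by (simp add: has_field_derivative_def)
qed

lemma dAlim: "t \<in> {0..T} \<Longrightarrow> ((\<lambda>x. Alim (x, t)) has_real_derivative Plim (x, t)) (at x)"
  by (rule deriv_limit[OF ulA ulP dAA]) auto
lemma dBlim: "t \<in> {0..T} \<Longrightarrow> ((\<lambda>x. Blim (x, t)) has_real_derivative Qlim (x, t)) (at x)"
  by (rule deriv_limit[OF ulB ulQ dBB]) auto

lemma solution_AB:
  "\<exists>A B P Q. continuous_on Z A \<and> continuous_on Z B \<and> continuous_on Z P \<and> continuous_on Z Q \<and>
     (\<forall>z\<in>Z. A z = opA p q (-2) a0 A B z) \<and> (\<forall>z\<in>Z. B z = opA p q 2 b0 B A z) \<and>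
     (\<forall>t\<in>{0..T}. \<forall>x. ((\<lambda>x. A (x, t)) has_real_derivative P (x, t)) (at x)) \<and>
     (\<forall>t\<in>{0..T}. \<forall>x. ((\<lambda>x. B (x, t)) has_real_derivative Q (x, t)) (at x))"
  using cAlim cBlim cPlim cQlim fixA fixB dAlim dBlim by blast

end


lemma partials_Z:
  fixes F Fx Ft :: "real \<times> real \<Rightarrow> real" and T :: real
  assumes fx: "((\<lambda>x. F (x, t)) has_real_derivative Fx (x, t)) (at x)"
    and fy: "\<And>x t. t \<in> {0..T} \<Longrightarrow> ((\<lambda>t. F (x, t)) has_real_derivative Ft (x, t)) (at t within {0..T})"
    and cFt: "continuous_on (UNIV \<times> {0..T}) Ft"
    and t: "t \<in> {0..T}"
  shows "(F has_derivative (\<lambda>(h, k). Fx (x, t) * h + Ft (x, t) * k)) (at (x, t) within UNIV \<times> {0..T})"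
proof -
  have "((\<lambda>(x, y). F (x, y)) has_derivative (\<lambda>(tx, ty). Fx (x, t) * tx + blinfun_apply (blinfun_mult_right (Ft (x, t))) ty))
      (at (x, t) within UNIV \<times> {0..T})"
  proof (rule has_derivative_partialsI[where f="\<lambda>x y. F (x, y)"])
    show "((\<lambda>x. F (x, t)) has_derivative (*) (Fx (x, t))) (at x within UNIV)"
      using fx by (simp add: has_field_derivative_def)
    show "\<And>x y. x \<in> UNIV \<Longrightarrow> y \<in> {0..T} \<Longrightarrow> ((\<lambda>y. F (x, y)) has_derivative blinfun_apply (blinfun_mult_right (Ft (x, y)))) (at y within {0..T})"
      using fy by (simp add: has_field_derivative_def blinfun_mult_right.rep_eq)
    have "continuous_on (UNIV \<times> {0..T}) (\<lambda>z. blinfun_mult_right (Ft z))"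
      by (rule continuous_on_compose2[OF bounded_linear.continuous_on[OF bounded_linear_blinfun_mult_right continuous_on_id] cFt]) auto
    then have "continuous (at (x, t) within UNIV \<times> {0..T}) (\<lambda>z. blinfun_mult_right (Ft z))"
      using t by (simp add: continuous_on_eq_continuous_within)
    then show "continuous (at (x, t) within UNIV \<times> {0..T}) (\<lambda>(x, y). blinfun_mult_right (Ft (x, y)))"
      by (simp add: case_prod_beta')
  qed (use t in auto)
  then show ?thesis by (simp add: blinfun_mult_right.rep_eq mult.commute)
qed

lemma comp_shift:
  fixes F D1 D2 :: "real \<times> real \<Rightarrow> real" and T c :: real
  assumes d: "\<And>z. z \<in> UNIV \<times> {0..T} \<Longrightarrow> (F has_derivative (\<lambda>(h, k). D1 z * h + D2 z * k)) (at z within UNIV \<times> {0..T})"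
    and z: "z \<in> UNIV \<times> {0..T}"
  shows "((\<lambda>z. F (fst z + c * snd z, snd z)) has_derivative
          (\<lambda>(h, k). D1 (fst z + c * snd z, snd z) * h + (c * D1 (fst z + c * snd z, snd z) + D2 (fst z + c * snd z, snd z)) * k))
         (at z within UNIV \<times> {0..T})"
proof -
  have lin: "((\<lambda>z::real\<times>real. (fst z + c * snd z, snd z)) has_derivative (\<lambda>y. (fst y + c * snd y, snd y))) (at z within UNIV \<times> {0..T})"
    by (auto intro!: derivative_eq_intros)
  have "((\<lambda>z. F (fst z + c * snd z, snd z)) has_derivative
     (\<lambda>y. (\<lambda>(h, k). D1 (fst z + c * snd z, snd z) * h + D2 (fst z + c * snd z, snd z) * k) (fst y + c * snd y, snd y)))
     (at z within UNIV \<times> {0..T})"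
    by (rule has_derivative_in_compose2[OF d _ z lin]) auto
  then show ?thesis by (simp add: case_prod_beta' algebra_simps)
qed


lemma has_derivative_half: "((f::'a::real_normed_vector \<Rightarrow> real) has_derivative f') F \<Longrightarrow> ((\<lambda>z. f z / 2) has_derivative (\<lambda>y. f' y / 2)) F"
  using has_derivative_scaleR_right[of f f' F "1/2"] by simp

lemma shift_cont':
  fixes T :: real
  assumes "continuous_on (UNIV \<times> {0..T}) Y"
  shows "continuous_on (UNIV \<times> {0..T}) (\<lambda>z. Y (fst z + snd z, snd z))"
    "continuous_on (UNIV \<times> {0..T}) (\<lambda>z. Y (fst z - snd z, snd z))"
  using shift_cont[OF assms, of 1] shift_cont[OF assms, of "-1"] by simp_all

lemma build_solution:
  fixes p q T \<epsilon> :: real and f g f1 aa bb :: "real \<Rightarrow> real" and A B P Q :: "real \<times> real \<Rightarrow> real"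
  assumes p: "p > 1" and q: "q > 1" and T: "T \<ge> 0"
    and cA: "continuous_on (UNIV \<times> {0..T}) A" and cB: "continuous_on (UNIV \<times> {0..T}) B"
    and cP: "continuous_on (UNIV \<times> {0..T}) P" and cQ: "continuous_on (UNIV \<times> {0..T}) Q"
    and fixA: "\<And>z. z \<in> UNIV \<times> {0..T} \<Longrightarrow> A z = opA p q (-2) aa A B z"
    and fixB: "\<And>z. z \<in> UNIV \<times> {0..T} \<Longrightarrow> B z = opA p q 2 bb B A z"
    and dA: "\<And>t x. t \<in> {0..T} \<Longrightarrow> ((\<lambda>x. A (x, t)) has_real_derivative P (x, t)) (at x)"
    and dB: "\<And>t x. t \<in> {0..T} \<Longrightarrow> ((\<lambda>x. B (x, t)) has_real_derivative Q (x, t)) (at x)"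
    and df: "\<And>x. (f has_real_derivative f1 x) (at x)"
    and aa: "\<And>x. aa x = \<epsilon> * g x + \<epsilon> * f1 x"
    and bb: "\<And>x. bb x = \<epsilon> * g x - \<epsilon> * f1 x"
  shows "\<exists>u. classical_solution p q \<epsilon> f g T u"
proof -
  let ?Z = "(UNIV \<times> {0..T}) :: (real \<times> real) set"
  define GA where "GA = (\<lambda>z. GG p q (A z) (B (fst z + (-2) * snd z, snd z)))"
  define GB where "GB = (\<lambda>z. GG p q (B z) (A (fst z + 2 * snd z, snd z)))"
  have cGA: "continuous_on ?Z GA" unfolding GA_def by (rule integrandA_cont[OF p q cA cB])
  have cGB: "continuous_on ?Z GB" unfolding GB_def by (rule integrandA_cont[OF p q cB cA])
  have tA: "((\<lambda>t. A (x, t)) has_real_derivative GA (x, t)) (at t within {0..T})" if t: "t \<in> {0..T}" for x t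
  proof (rule has_field_derivative_transform_within[where d=1])
    show "((\<lambda>t. opA p q (-2) aa A B (x, t)) has_real_derivative GA (x, t)) (at t within {0..T})"
      using opA_deriv_t[OF p q t cA cB, of "-2" aa x] by (simp add: GA_def)
    show "\<And>y. y \<in> {0..T} \<Longrightarrow> dist y t < 1 \<Longrightarrow> opA p q (- 2) aa A B (x, y) = A (x, y)"
      using fixA by auto
  qed (use t in auto)
  have tB: "((\<lambda>t. B (x, t)) has_real_derivative GB (x, t)) (at t within {0..T})" if t: "t \<in> {0..T}" for x t
  proof (rule has_field_derivative_transform_within[where d=1])
    show "((\<lambda>t. opA p q 2 bb B A (x, t)) has_real_derivative GB (x, t)) (at t within {0..T})"
      using opA_deriv_t[OF p q t cB cA, of 2 bb x] by (simp add: GB_def)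
    show "\<And>y. y \<in> {0..T} \<Longrightarrow> dist y t < 1 \<Longrightarrow> opA p q 2 bb B A (x, y) = B (x, y)"
      using fixB by auto
  qed (use t in auto)
  have DA: "(A has_derivative (\<lambda>(h, k). P z * h + GA z * k)) (at z within ?Z)" if z: "z \<in> ?Z" for z
  proof -
    obtain x t where zt: "z = (x, t)" "t \<in> {0..T}" using z by auto
    show ?thesis unfolding zt(1) by (rule partials_Z[where F=A and Fx=P and Ft=GA, OF dA[OF zt(2)] tA cGA zt(2)])
  qed
  have DB: "(B has_derivative (\<lambda>(h, k). Q z * h + GB z * k)) (at z within ?Z)" if z: "z \<in> ?Z" for z
  proof -
    obtain x t where zt: "z = (x, t)" "t \<in> {0..T}" using z by auto
    show ?thesis unfolding zt(1) by (rule partials_Z[where F=B and Fx=Q and Ft=GB, OF dB[OF zt(2)] tB cGB zt(2)])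
  qed
  define Pa where "Pa = (\<lambda>z. P (fst z + snd z, snd z))"
  define Qb where "Qb = (\<lambda>z. Q (fst z - snd z, snd z))"
  define GAa where "GAa = (\<lambda>z. GA (fst z + snd z, snd z))"
  define GBb where "GBb = (\<lambda>z. GB (fst z - snd z, snd z))"
  define a where "a = (\<lambda>z. A (fst z + snd z, snd z))"
  define b where "b = (\<lambda>z. B (fst z - snd z, snd z))"
  have Da: "(a has_derivative (\<lambda>(h, k). Pa z * h + (Pa z + GAa z) * k)) (at z within ?Z)" if z: "z \<in> ?Z" for z
    using comp_shift[OF DA z, of 1] by (simp add: a_def Pa_def GAa_def)
  have Db: "(b has_derivative (\<lambda>(h, k). Qb z * h + (- Qb z + GBb z) * k)) (at z within ?Z)" if z: "z \<in> ?Z" for z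
    using comp_shift[OF DB z, of "-1"] by (simp add: b_def Qb_def GBb_def)
  have GAGB: "GAa z = GBb z" for z
    by (simp add: GAa_def GBb_def GA_def GB_def GG_sym[of p q "A (fst z + snd z, snd z)"] algebra_simps)
  have cPa: "continuous_on ?Z Pa" unfolding Pa_def by (rule shift_cont'(1)[OF cP])
  have cQb: "continuous_on ?Z Qb" unfolding Qb_def by (rule shift_cont'(2)[OF cQ])
  have cGAa: "continuous_on ?Z GAa" unfolding GAa_def by (rule shift_cont'(1)[OF cGA])
  have cGBb: "continuous_on ?Z GBb" unfolding GBb_def by (rule shift_cont'(2)[OF cGB])
  have ca: "continuous_on ?Z a" unfolding a_def by (rule shift_cont'(1)[OF cA])
  have cb: "continuous_on ?Z b" unfolding b_def by (rule shift_cont'(2)[OF cB])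
  define v where "v = (\<lambda>z. (a z + b z) / 2)"
  define w where "w = (\<lambda>z. (a z - b z) / 2)"
  define uxx where "uxx = (\<lambda>z. (Pa z - Qb z) / 2)"
  define uxt where "uxt = (\<lambda>z. (Pa z + GAa z + Qb z - GBb z) / 2)"
  define utx where "utx = (\<lambda>z. (Pa z + Qb z) / 2)"
  define utt where "utt = (\<lambda>z. (Pa z + GAa z - Qb z + GBb z) / 2)"
  have cv: "continuous_on ?Z v" unfolding v_def using ca cb by (intro continuous_intros) auto
  have cw: "continuous_on ?Z w" unfolding w_def using ca cb by (intro continuous_intros) auto
  have Dv: "(v has_derivative (\<lambda>(h, k). utx z * h + utt z * k)) (at z within ?Z)" if z: "z \<in> ?Z" for z
  proof -
    have "((\<lambda>z. (a z + b z) / 2) has_derivative (\<lambda>y. ((\<lambda>(h, k). Pa z * h + (Pa z + GAa z) * k) y + (\<lambda>(h, k). Qb z * h + (- Qb z + GBb z) * k) y) / 2)) (at z within ?Z)"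
      by (intro has_derivative_half has_derivative_add Da Db z)
    then show ?thesis unfolding v_def
      by (rule has_derivative_eq_rhs) (auto simp: fun_eq_iff utx_def utt_def field_simps split: prod.splits)
  qed
  have Dw: "(w has_derivative (\<lambda>(h, k). uxx z * h + uxt z * k)) (at z within ?Z)" if z: "z \<in> ?Z" for z
  proof -
    have "((\<lambda>z. (a z - b z) / 2) has_derivative (\<lambda>y. ((\<lambda>(h, k). Pa z * h + (Pa z + GAa z) * k) y - (\<lambda>(h, k). Qb z * h + (- Qb z + GBb z) * k) y) / 2)) (at z within ?Z)"
      by (intro has_derivative_half has_derivative_diff Da Db z)
    then show ?thesis unfolding w_def uxx_def uxt_def by (simp add: case_prod_beta' algebra_simps add_divide_distrib diff_divide_distrib)
  qed
  have A0: "A (x, 0) = aa x" for x using fixA[of "(x, 0)"] T by (simp add: opA_def)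
  have B0: "B (x, 0) = bb x" for x using fixB[of "(x, 0)"] T by (simp add: opA_def)
  have w0: "w (x, 0) = \<epsilon> * f1 x" for x by (simp add: w_def a_def b_def A0 B0 aa bb)
  have v0: "v (x, 0) = \<epsilon> * g x" for x by (simp add: v_def a_def b_def A0 B0 aa bb)
  have utx_eq: "utx z = uxt z" for z using GAGB[of z] by (simp add: utx_def uxt_def)
  have vx: "((\<lambda>x. v (x, t)) has_real_derivative utx (x, t)) (at x)" if t: "t \<in> {0..T}" for x t
  proof -
    have h1: "((\<lambda>x. A (x + t, t)) has_real_derivative P (x + t, t) * 1) (at x)"
      by (rule DERIV_chain2[where f="\<lambda>y. A (y, t)", OF dA[OF t]]) (auto intro!: derivative_eq_intros)
    have h2: "((\<lambda>x. B (x - t, t)) has_real_derivative Q (x - t, t) * 1) (at x)"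
      by (rule DERIV_chain2[where f="\<lambda>y. B (y, t)", OF dB[OF t]]) (auto intro!: derivative_eq_intros)
    show ?thesis using DERIV_cdivide[OF DERIV_add[OF h1 h2], of 2]
      by (simp add: v_def a_def b_def utx_def Pa_def Qb_def)
  qed
  have wt: "((\<lambda>s. w (x, s)) has_vector_derivative uxt (x, s)) (at s within {0..t})"
    if t: "t \<le> T" and s: "s \<in> {0..t}" for x t s
  proof -
    have lin: "((\<lambda>s. (x, s)) has_derivative (\<lambda>y. (0, y))) (at s within {0..t})"
      by (auto intro!: derivative_eq_intros)
    have "((\<lambda>s. w (x, s)) has_derivative (\<lambda>y. (\<lambda>(h, k). uxx (x, s) * h + uxt (x, s) * k) (0, y))) (at s within {0..t})"
      by (rule has_derivative_in_compose2[OF Dw _ _ lin]) (use t s in auto)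
    then show ?thesis by (simp add: has_vector_derivative_def mult.commute)
  qed
  define u where "u = (\<lambda>z. \<epsilon> * f (fst z) + integral {0..snd z} (\<lambda>s. v (fst z, s)))"
  have ux_u: "((\<lambda>x. u (x, t)) has_real_derivative w (x, t)) (at x)" if t: "t \<in> {0..T}" for x t
  proof -
    have L: "((\<lambda>x. integral (cbox 0 t) (\<lambda>s. v (x, s))) has_field_derivative
        integral (cbox 0 t) (\<lambda>s. utx (x, s))) (at x within UNIV)"
    proof (rule leibniz_rule_field_derivative)
      fix x s :: real assume "x \<in> UNIV" "s \<in> cbox 0 t"
      then have s: "s \<in> {0..T}" using t by (auto simp: box_real)
      show "((\<lambda>x. v (x, s)) has_field_derivative utx (x, s)) (at x within UNIV)" using vx[OF s] by simp
    next
      fix x :: real assume "x \<in> UNIV"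
      show "(\<lambda>s. v (x, s)) integrable_on cbox 0 t"
        unfolding box_real using t by (intro integrable_continuous_real slice_cont[OF cv]) auto
    next
      have cu: "continuous_on ?Z utx" unfolding utx_def using cPa cQb by (intro continuous_intros) auto
      have sub: "UNIV \<times> cbox 0 t \<subseteq> ?Z" using t by (auto simp: box_real)
      show "continuous_on (UNIV \<times> cbox 0 t) (\<lambda>(x, s). utx (x, s))"
        using continuous_on_subset[OF cu sub] by (simp add: case_prod_beta')
    qed auto
    have I: "integral {0..t} (\<lambda>s. utx (x, s)) = w (x, t) - w (x, 0)"
    proof -
      have "((\<lambda>s. uxt (x, s)) has_integral w (x, t) - w (x, 0)) {0..t}"
        using t by (intro fundamental_theorem_of_calculus wt) auto
      then show ?thesis using utx_eq by (simp add: integral_unique)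
    qed
    show ?thesis
      using DERIV_add[OF DERIV_cmult[OF df, of \<epsilon>] L[unfolded box_real]] I w0[of x]
      by (simp add: u_def)
  qed
  have ut_u: "((\<lambda>t. u (x, t)) has_real_derivative v (x, t)) (at t within {0..T})" if t: "t \<in> {0..T}" for x t
  proof -
    have "((\<lambda>t. integral {0..t} (\<lambda>s. v (x, s))) has_real_derivative v (x, t)) (at t within {0..T})"
      by (rule integral_has_real_derivative[OF slice_cont[OF cv order_refl] t])
    then show ?thesis using DERIV_add[OF DERIV_const[of "\<epsilon> * f x"]] by (simp add: u_def)
  qed
  have Du: "(u has_derivative (\<lambda>(h, k). w z * h + v z * k)) (at z within ?Z)" if z: "z \<in> ?Z" for z
  proof -
    obtain x t where zt: "z = (x, t)" "t \<in> {0..T}" using z by auto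
    show ?thesis unfolding zt(1) by (rule partials_Z[where F=u and Fx=w and Ft=v, OF ux_u[OF zt(2)] ut_u cv zt(2)])
  qed
  have eqn: "utt (x, t) - uxx (x, t) = \<bar>v (x, t)\<bar> powr p * \<bar>w (x, t)\<bar> powr q" for x t
  proof -
    have "utt (x, t) - uxx (x, t) = GAa (x, t)" using GAGB[of "(x, t)"] by (simp add: utt_def uxx_def field_simps)
    also have "\<dots> = GG p q (a (x, t)) (b (x, t))" by (simp add: GAa_def GA_def a_def b_def)
    also have "\<dots> = \<bar>v (x, t)\<bar> powr p * \<bar>w (x, t)\<bar> powr q" by (simp add: GG_def phi_def v_def w_def)
    finally show ?thesis .
  qed
  have conts: "continuous_on ?Z uxx" "continuous_on ?Z uxt" "continuous_on ?Z utx" "continuous_on ?Z utt"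
    unfolding uxx_def uxt_def utx_def utt_def using cPa cQb cGAa cGBb by (intro continuous_intros; simp)+
  have init: "\<forall>x. u (x, 0) = \<epsilon> * f x \<and> v (x, 0) = \<epsilon> * g x" by (simp add: u_def v0)
  show ?thesis
    unfolding classical_solution_def Let_def
    apply (rule exI[of _ u], rule exI[of _ w], rule exI[of _ v], rule exI[of _ uxx], rule exI[of _ uxt],
        rule exI[of _ utx], rule exI[of _ utt])
    apply (intro conjI)
    subgoal using Du by blast
    subgoal using Dw by blast
    subgoal using Dv by blast
    subgoal by (rule conts(1))
    subgoal by (rule conts(2))
    subgoal by (rule conts(3))
    subgoal by (rule conts(4))
    subgoal using eqn by blast
    subgoal by (rule init)
    done
qed



lemma exists_solution:
  fixes p q T \<epsilon> C0 C1 :: real and f g f1 g1 f2 :: "real \<Rightarrow> real"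
  assumes p: "p > 1" and q: "q > 1" and T: "T \<ge> 0" and e: "\<epsilon> > 0"
    and df: "\<And>x. (f has_real_derivative f1 x) (at x)"
    and df1: "\<And>x. (f1 has_real_derivative f2 x) (at x)"
    and dg: "\<And>x. (g has_real_derivative g1 x) (at x)"
    and cf2: "continuous_on UNIV f2" and cg1: "continuous_on UNIV g1"
    and B0: "\<And>x. \<bar>g x\<bar> + \<bar>f1 x\<bar> \<le> C0" and B1: "\<And>x. \<bar>g1 x\<bar> + \<bar>f2 x\<bar> \<le> C1"
    and C0: "C0 > 0" and C1: "C1 \<ge> 0"
    and small1: "T * (2 * (\<epsilon> * C0)) powr (p + q) \<le> \<epsilon> * C0"
    and small2: "T * ((p + q) * (2 * (\<epsilon> * C0)) powr (p + q - 1)) \<le> 1/4"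
  shows "\<exists>u. classical_solution p q \<epsilon> f g T u"
proof -
  have bnd: "\<bar>\<epsilon> * u + \<epsilon> * v\<bar> \<le> \<epsilon> * C" "\<bar>\<epsilon> * u - \<epsilon> * v\<bar> \<le> \<epsilon> * C"
    if "\<bar>u\<bar> + \<bar>v\<bar> \<le> C" for u v C :: real
  proof -
    have "\<bar>\<epsilon> * u + \<epsilon> * v\<bar> \<le> \<epsilon> * (\<bar>u\<bar> + \<bar>v\<bar>)" "\<bar>\<epsilon> * u - \<epsilon> * v\<bar> \<le> \<epsilon> * (\<bar>u\<bar> + \<bar>v\<bar>)"
      using e by (auto simp: abs_mult distrib_left[symmetric] right_diff_distrib[symmetric]
          intro!: mult_left_mono abs_triangle_ineq abs_triangle_ineq4)
    moreover have "\<epsilon> * (\<bar>u\<bar> + \<bar>v\<bar>) \<le> \<epsilon> * C" using that e by (intro mult_left_mono) auto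
    ultimately show "\<bar>\<epsilon> * u + \<epsilon> * v\<bar> \<le> \<epsilon> * C" "\<bar>\<epsilon> * u - \<epsilon> * v\<bar> \<le> \<epsilon> * C" by linarith+
  qed
  interpret I: iterset p q T "\<epsilon> * C0" "\<epsilon> * C1" "\<lambda>x. \<epsilon> * g x + \<epsilon> * f1 x" "\<lambda>x. \<epsilon> * g x - \<epsilon> * f1 x"
    "\<lambda>x. \<epsilon> * g1 x + \<epsilon> * f2 x" "\<lambda>x. \<epsilon> * g1 x - \<epsilon> * f2 x"
  proof unfold_locales
    show "0 < \<epsilon> * C0" using e C0 by simp
    show "0 \<le> \<epsilon> * C1" using e C1 by simp
    show "((\<lambda>x. \<epsilon> * g x + \<epsilon> * f1 x) has_real_derivative \<epsilon> * g1 x + \<epsilon> * f2 x) (at x)" for x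
      using dg df1 by (auto intro!: derivative_eq_intros)
    show "((\<lambda>x. \<epsilon> * g x - \<epsilon> * f1 x) has_real_derivative \<epsilon> * g1 x - \<epsilon> * f2 x) (at x)" for x
      using dg df1 by (auto intro!: derivative_eq_intros)
    show "continuous_on UNIV (\<lambda>x. \<epsilon> * g1 x + \<epsilon> * f2 x)" "continuous_on UNIV (\<lambda>x. \<epsilon> * g1 x - \<epsilon> * f2 x)"
      using cf2 cg1 by (auto intro!: continuous_intros)
  qed (use p q T small1 small2 bnd B0 B1 in auto)
  obtain A B P Q where ABPQ: "continuous_on (UNIV \<times> {0..T}) A" "continuous_on (UNIV \<times> {0..T}) B"
    "continuous_on (UNIV \<times> {0..T}) P" "continuous_on (UNIV \<times> {0..T}) Q"
    "\<forall>z\<in>UNIV \<times> {0..T}. A z = opA p q (-2) (\<lambda>x. \<epsilon> * g x + \<epsilon> * f1 x) A B z"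
    "\<forall>z\<in>UNIV \<times> {0..T}. B z = opA p q 2 (\<lambda>x. \<epsilon> * g x - \<epsilon> * f1 x) B A z"
    "\<forall>t\<in>{0..T}. \<forall>x. ((\<lambda>x. A (x, t)) has_real_derivative P (x, t)) (at x)"
    "\<forall>t\<in>{0..T}. \<forall>x. ((\<lambda>x. B (x, t)) has_real_derivative Q (x, t)) (at x)"
    using I.solution_AB by blast
  show ?thesis
    by (rule build_solution[where aa="\<lambda>x. \<epsilon> * g x + \<epsilon> * f1 x" and bb="\<lambda>x. \<epsilon> * g x - \<epsilon> * f1 x", OF p q T ABPQ(1-4)])
       (use ABPQ(5-8) df in auto)
qed



lemma deriv_zero_out:
  fixes h h' :: "real \<Rightarrow> real"
  assumes d: "\<And>x. (h has_real_derivative h' x) (at x)" and z: "\<And>x. \<bar>x\<bar> > R \<Longrightarrow> h x = 0" and x: "\<bar>x\<bar> > R"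
  shows "h' x = 0"
proof -
  have "(h has_real_derivative 0) (at x)"
  proof (rule has_field_derivative_transform_within_open[of "\<lambda>y. 0" 0 x "{y. R < \<bar>y\<bar>}"])
    show "open {y::real. R < \<bar>y\<bar>}" by (intro open_Collect_less continuous_intros)
  qed (use x z in auto)
  then show ?thesis using DERIV_unique d by blast
qed

lemma bound_supp:
  fixes h :: "real \<Rightarrow> real"
  assumes c: "continuous_on UNIV h" and z: "\<And>x. \<bar>x\<bar> > R \<Longrightarrow> h x = 0"
  shows "\<exists>B\<ge>0. \<forall>x. \<bar>h x\<bar> \<le> B"
proof -
  have "bounded (h ` {-R..R})"
    by (intro compact_imp_bounded compact_continuous_image continuous_on_subset[OF c]) auto
  then obtain B where B0: "\<forall>x\<in>{-R..R}. \<bar>h x\<bar> \<le> B" unfolding bounded_iff by auto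
  then have B: "\<And>x. x \<in> {-R..R} \<Longrightarrow> \<bar>h x\<bar> \<le> B" by blast
  show ?thesis
  proof (intro exI[of _ "max B 0"] conjI allI)
    fix x
    show "\<bar>h x\<bar> \<le> max B 0"
    proof (cases "\<bar>x\<bar> > R")
      case True then show ?thesis using z by simp
    next
      case False
      then have "x \<in> {-R..R}" by (simp add: abs_le_iff not_less)
      then show ?thesis using B[of x] by simp
    qed
  qed simp
qed

theorem theorem2p1:
  fixes p q R :: real and f g :: "real \<Rightarrow> real"
  assumes "p > 1" and "q > 1" and "R \<ge> 1"
    and "C2_supp R f" and "C1_supp R g"
  shows "\<exists>\<epsilon>0 > 0. \<exists>c > 0. \<forall>\<epsilon>. 0 < \<epsilon> \<and> \<epsilon> \<le> \<epsilon>0 \<longrightarrow>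
           (\<forall>T. 0 < T \<and> T \<le> c * \<epsilon> powr (-(p + q - 1)) \<longrightarrow>
                 (\<exists>u. classical_solution p q \<epsilon> f g T u)) \<and>
           lifespan p q \<epsilon> f g \<ge> ereal (c * \<epsilon> powr (-(p + q - 1)))"
proof -
  have p: "p > 1" and q: "q > 1" using assms by auto
  obtain f1 f2 where df: "\<And>x. (f has_real_derivative f1 x) (at x)"
    and df1: "\<And>x. (f1 has_real_derivative f2 x) (at x)" and cf2: "continuous_on UNIV f2"
    and fz: "\<And>x. \<bar>x\<bar> > R \<Longrightarrow> f x = 0"
    using assms(4) unfolding C2_supp_def by blast
  obtain g1 where dg: "\<And>x. (g has_real_derivative g1 x) (at x)" and cg1: "continuous_on UNIV g1"
    and gz: "\<And>x. \<bar>x\<bar> > R \<Longrightarrow> g x = 0"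
    using assms(5) unfolding C1_supp_def by blast
  have f1z: "\<And>x. \<bar>x\<bar> > R \<Longrightarrow> f1 x = 0" using deriv_zero_out[OF df fz] by blast
  have f2z: "\<And>x. \<bar>x\<bar> > R \<Longrightarrow> f2 x = 0" using deriv_zero_out[OF df1 f1z] by blast
  have g1z: "\<And>x. \<bar>x\<bar> > R \<Longrightarrow> g1 x = 0" using deriv_zero_out[OF dg gz] by blast
  have cg: "continuous_on UNIV g" using dg by (intro continuous_at_imp_continuous_on) (auto intro: DERIV_isCont)
  have cf1: "continuous_on UNIV f1" using df1 by (intro continuous_at_imp_continuous_on) (auto intro: DERIV_isCont)
  obtain Bg where Bg: "Bg \<ge> 0" "\<And>x. \<bar>g x\<bar> \<le> Bg" using bound_supp[OF cg gz] by blast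
  obtain Bf1 where Bf1: "Bf1 \<ge> 0" "\<And>x. \<bar>f1 x\<bar> \<le> Bf1" using bound_supp[OF cf1 f1z] by blast
  obtain Bg1 where Bg1: "Bg1 \<ge> 0" "\<And>x. \<bar>g1 x\<bar> \<le> Bg1" using bound_supp[OF cg1 g1z] by blast
  obtain Bf2 where Bf2: "Bf2 \<ge> 0" "\<And>x. \<bar>f2 x\<bar> \<le> Bf2" using bound_supp[OF cf2 f2z] by blast
  define C0 where "C0 = Bg + Bf1 + 1"
  define C1 where "C1 = Bg1 + Bf2"
  have C0: "C0 > 0" using Bg Bf1 by (simp add: C0_def)
  have C1: "C1 \<ge> 0" using Bg1 Bf2 by (simp add: C1_def)
  have B0: "\<bar>g x\<bar> + \<bar>f1 x\<bar> \<le> C0" for x using Bg(2)[of x] Bf1(2)[of x] by (simp add: C0_def)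
  have B1: "\<bar>g1 x\<bar> + \<bar>f2 x\<bar> \<le> C1" for x using Bg1(2)[of x] Bf2(2)[of x] by (simp add: C1_def)
  define K1 where "K1 = 2 powr (p + q) * C0 powr (p + q - 1)"
  define K2 where "K2 = 4 * (p + q) * (2 * C0) powr (p + q - 1)"
  have K1: "K1 > 0" using C0 by (simp add: K1_def)
  have K2: "K2 > 0" using C0 p q by (simp add: K2_def)
  define c where "c = min (1 / K1) (1 / K2)"
  have c: "c > 0" using K1 K2 by (simp add: c_def)
  have main: "\<exists>u. classical_solution p q \<epsilon> f g T u" if e: "\<epsilon> > 0" and T: "0 < T" "T \<le> c * \<epsilon> powr (-(p + q - 1))" for \<epsilon> T
  proof (rule exists_solution[OF p q _ e df df1 dg cf2 cg1 B0 B1 C0 C1])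
    show "T \<ge> 0" using T by simp
    define E where "E = \<epsilon> powr (-(p + q - 1))"
    have E: "E > 0" using e by (simp add: E_def)
    have E1: "E * \<epsilon> powr (p + q) = \<epsilon>" using e by (simp add: E_def powr_add[symmetric])
    have E2: "E * \<epsilon> powr (p + q - 1) = 1" using e by (simp add: E_def powr_add[symmetric])
    have TE: "T \<le> c * E" using T by (simp add: E_def)
    have C0p: "C0 powr (p + q) = C0 powr (p + q - 1) * C0"
    proof -
      have "C0 powr (p + q - 1) * C0 powr 1 = C0 powr (p + q - 1 + 1)" by (rule powr_add[symmetric])
      then show ?thesis using C0 by simp
    qed
    have "(2 * (\<epsilon> * C0)) powr (p + q) = K1 * C0 * \<epsilon> powr (p + q)"
      using e C0 by (simp add: powr_mult K1_def C0p)
    then have "T * (2 * (\<epsilon> * C0)) powr (p + q) = T * (K1 * C0 * \<epsilon> powr (p + q))" by simp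
    also have "\<dots> \<le> (c * E) * (K1 * C0 * \<epsilon> powr (p + q))"
      using TE K1 C0 by (intro mult_right_mono) auto
    also have "\<dots> \<le> (1 / K1 * E) * (K1 * C0 * \<epsilon> powr (p + q))"
      using K1 C0 E by (intro mult_right_mono) (auto simp: c_def)
    also have "\<dots> = C0 * (E * \<epsilon> powr (p + q))" using K1 by (simp add: field_simps)
    also have "\<dots> = \<epsilon> * C0" using E1 by simp
    finally show "T * (2 * (\<epsilon> * C0)) powr (p + q) \<le> \<epsilon> * C0" .
    have "(2 * (\<epsilon> * C0)) powr (p + q - 1) = ((2 * C0) * \<epsilon>) powr (p + q - 1)" by (simp add: algebra_simps)
    also have "\<dots> = (2 * C0) powr (p + q - 1) * \<epsilon> powr (p + q - 1)"
      using e C0 by (simp add: powr_mult)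
    finally have "(2 * (\<epsilon> * C0)) powr (p + q - 1) = (2 * C0) powr (p + q - 1) * \<epsilon> powr (p + q - 1)" .
    then have "T * ((p + q) * (2 * (\<epsilon> * C0)) powr (p + q - 1)) = T * (K2 / 4 * \<epsilon> powr (p + q - 1))"
      by (simp add: K2_def)
    also have "\<dots> \<le> (c * E) * (K2 / 4 * \<epsilon> powr (p + q - 1))"
      using TE K2 by (intro mult_right_mono) auto
    also have "\<dots> \<le> (1 / K2 * E) * (K2 / 4 * \<epsilon> powr (p + q - 1))"
      using K2 E by (intro mult_right_mono) (auto simp: c_def)
    also have "\<dots> = (E * \<epsilon> powr (p + q - 1)) / 4" using K2 by (simp add: field_simps)
    also have "\<dots> = 1/4" using E2 by simp
    finally show "T * ((p + q) * (2 * (\<epsilon> * C0)) powr (p + q - 1)) \<le> 1/4" .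
  qed
  have all: "\<forall>\<epsilon>. 0 < \<epsilon> \<and> \<epsilon> \<le> 1 \<longrightarrow>
           (\<forall>T. 0 < T \<and> T \<le> c * \<epsilon> powr (-(p + q - 1)) \<longrightarrow>
                 (\<exists>u. classical_solution p q \<epsilon> f g T u)) \<and>
           lifespan p q \<epsilon> f g \<ge> ereal (c * \<epsilon> powr (-(p + q - 1)))"
  proof (rule allI, rule impI)
    fix \<epsilon> :: real assume e: "0 < \<epsilon> \<and> \<epsilon> \<le> 1"
    have A: "\<forall>T. 0 < T \<and> T \<le> c * \<epsilon> powr (-(p + q - 1)) \<longrightarrow> (\<exists>u. classical_solution p q \<epsilon> f g T u)"
      using main e by blast
    have pos: "c * \<epsilon> powr (-(p + q - 1)) > 0" using c e by simp
    then have "c * \<epsilon> powr (-(p + q - 1)) \<in> {T. T > 0 \<and> (\<exists>u. classical_solution p q \<epsilon> f g T u)}"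
      using main e by blast
    then have B: "lifespan p q \<epsilon> f g \<ge> ereal (c * \<epsilon> powr (-(p + q - 1)))"
      unfolding lifespan_def by (intro Sup_upper imageI)
    show "(\<forall>T. 0 < T \<and> T \<le> c * \<epsilon> powr (-(p + q - 1)) \<longrightarrow> (\<exists>u. classical_solution p q \<epsilon> f g T u)) \<and>
           lifespan p q \<epsilon> f g \<ge> ereal (c * \<epsilon> powr (-(p + q - 1)))" using A B by blast
  qed
  show ?thesis using all c zero_less_one by blast
qed


end
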